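(* Let $\Gamma$ be a connected signed graph on $N$ vertices, and let $n_-(\Gamma), n_0(\Gamma), n_+(\Gamma)$ be the numbers of negative, zero and positive eigenvalues of its signed Laplacian $\mathcal{L}(\Gamma)$. Then for every choice of edge weights (with the given signs) one has \[ c(\Gamma_+)-1 \le n_+(\Gamma) \le N-c(\Gamma_-),\qquad c(\Gamma_-)-1 \le n_-(\Gamma) \le N-c(\Gamma_+),\qquad 1 \le n_0(\Gamma) \le N+2-c(\Gamma_-)-c(\Gamma_+). \] Moreover these bounds are tight: for any such graph (i.e. any fixed underlying graph and fixed assignment of signs to its edges) there exists a nonempty open set of weights (with these signs) for which $n_+(\Gamma)=c(\Gamma_+)-1$, $n_-(\Gamma)=N-c(\Gamma_+)$, $n_0(\Gamma)=1$, and there exists a nonempty open set of weights (with these signs) for which $n_+(\Gamma)=N-c(\Gamma_-)$, $n_-(\Gamma)=c(\Gamma_-)-1$, $n_0(\Gamma)=1$.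
   Context: A signed graph $\Gamma$ is a finite simple undirected graph with vertex set $V(\Gamma)=\{1,\dots,N\}$ in which every edge $\{i,j\}$ carries a nonzero real weight $\gamma_{ij}=\gamma_{ji}$, which may be of either sign; set $\gamma_{ij}=0$ if $i,j$ are not adjacent. The signed Laplacian $\mathcal{L}(\Gamma)$ is the symmetric $N\times N$ matrix with $\mathcal{L}(\Gamma)_{ij}=\gamma_{ij}$ for $i\neq j$ and $\mathcal{L}(\Gamma)_{ii}=-\sum_{k\neq i}\gamma_{ik}$. $\Gamma_+$ (resp. $\Gamma_-$) denotes the spanning subgraph with vertex set $V(\Gamma)$ whose edges are exactly the edges of $\Gamma$ with positive (resp. negative) weight. For a graph $H$, $c(H)$ denotes its number of connected components (isolated vertices count as components). Eigenvalues are counted with multiplicity. *)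

theory Defs
  imports "Jordan_Normal_Form.Char_Poly"
begin

text \<open>Vertices are 0,...,N-1. A weight function gamma is symmetric, zero off the edges.\<close>

definition signed_laplacian :: "nat \<Rightarrow> (nat \<Rightarrow> nat \<Rightarrow> real) \<Rightarrow> real mat" where
  "signed_laplacian N \<gamma> = mat N N (\<lambda>(i,j).
     if i = j then - (\<Sum>k\<in>{0..<N}-{i}. \<gamma> i k) else \<gamma> i j)"

definition n_pos :: "real mat \<Rightarrow> nat" where
  "n_pos A = (\<Sum>x\<in>{x. x > 0 \<and> poly (char_poly A) x = 0}. order x (char_poly A))"

definition n_neg :: "real mat \<Rightarrow> nat" where
  "n_neg A = (\<Sum>x\<in>{x. x < 0 \<and> poly (char_poly A) x = 0}. order x (char_poly A))"

definition n_zero :: "real mat \<Rightarrow> nat" where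
  "n_zero A = order 0 (char_poly A)"

definition simple_graph :: "nat \<Rightarrow> (nat \<Rightarrow> nat \<Rightarrow> bool) \<Rightarrow> bool" where
  "simple_graph N E \<longleftrightarrow> (\<forall>i j. E i j \<longrightarrow> i < N \<and> j < N \<and> i \<noteq> j \<and> E j i)"

definition graph_connected :: "nat \<Rightarrow> (nat \<Rightarrow> nat \<Rightarrow> bool) \<Rightarrow> bool" where
  "graph_connected N E \<longleftrightarrow> N > 0 \<and> (\<forall>i<N. \<forall>j<N. E\<^sup>*\<^sup>* i j)"

text \<open>Number of connected components of the spanning graph on {0..<N} with edges E
  (isolated vertices count).\<close>

definition num_components :: "nat \<Rightarrow> (nat \<Rightarrow> nat \<Rightarrow> bool) \<Rightarrow> nat" where
  "num_components N E = card ({0..<N} // {(i,j). E\<^sup>*\<^sup>* i j})"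

definition admissible_weights ::
  "(nat \<Rightarrow> nat \<Rightarrow> bool) \<Rightarrow> (nat \<Rightarrow> nat \<Rightarrow> bool) \<Rightarrow> (nat \<Rightarrow> nat \<Rightarrow> real) set" where
  "admissible_weights E \<sigma> = {\<gamma>. (\<forall>i j. \<gamma> i j = \<gamma> j i) \<and>
      (\<forall>i j. E i j \<longrightarrow> (\<sigma> i j \<longrightarrow> \<gamma> i j > 0) \<and> (\<not> \<sigma> i j \<longrightarrow> \<gamma> i j < 0)) \<and>
      (\<forall>i j. \<not> E i j \<longrightarrow> \<gamma> i j = 0)}"

definition weights_open ::
  "(nat \<Rightarrow> nat \<Rightarrow> bool) \<Rightarrow> (nat \<Rightarrow> nat \<Rightarrow> bool) \<Rightarrow> (nat \<Rightarrow> nat \<Rightarrow> real) set \<Rightarrow> bool" where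
  "weights_open E \<sigma> U \<longleftrightarrow> U \<subseteq> admissible_weights E \<sigma> \<and>
     (\<forall>\<gamma>\<in>U. \<exists>\<epsilon>>0. \<forall>\<gamma>'\<in>admissible_weights E \<sigma>.
        (\<forall>i j. E i j \<longrightarrow> \<bar>\<gamma>' i j - \<gamma> i j\<bar> < \<epsilon>) \<longrightarrow> \<gamma>' \<in> U)"

end

theory Submission
  imports Defs "Jordan_Normal_Form.Schur_Decomposition"
begin

lemma sym_real_eigenvalue:
  fixes A :: "real mat"
  assumes A: "A \<in> carrier_mat n n" and sym: "\<And>i j. i < n \<Longrightarrow> j < n \<Longrightarrow> A $$ (i,j) = A $$ (j,i)"
    and n: "n > 0"
  shows "\<exists>e. eigenvalue A e"
proof -
  define Ac where "Ac = map_mat complex_of_real A"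
  have Ac: "Ac \<in> carrier_mat n n" using A by (simp add: Ac_def)
  obtain as where cp: "char_poly Ac = (\<Prod> a \<leftarrow> as. [:- a, 1:])" and len: "length as = n"
    using char_poly_factorized[OF Ac] by blast
  define a where "a = as ! 0"
  have "a \<in> set as" using len n by (simp add: a_def)
  then have "poly (char_poly Ac) a = 0" unfolding cp
    by (induct as) (auto)
  then have "eigenvalue Ac a" using eigenvalue_root_char_poly[OF Ac] by simp
  then obtain v where ev: "eigenvector Ac v a" unfolding eigenvalue_def by blast
  then have v: "v \<in> carrier_vec n" and v0: "v \<noteq> 0\<^sub>v n" and Av: "Ac *\<^sub>v v = a \<cdot>\<^sub>v v"
    using Ac unfolding eigenvector_def by auto
  define s where "s = (\<Sum>i<n. \<Sum>j<n. cnj (v $ i) * complex_of_real (A $$ (i,j)) * v $ j)"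
  define r where "r = (\<Sum>i<n. (cmod (v $ i))^2)"
  have "s = (\<Sum>i<n. cnj (v $ i) * (Ac *\<^sub>v v) $ i)"
    unfolding s_def using A v
    by (auto simp: Ac_def scalar_prod_def sum_distrib_left mult.assoc lessThan_atLeast0 intro!: sum.cong)
  also have "\<dots> = (\<Sum>i<n. a * (cnj (v $ i) * v $ i))"
    using Av v by (auto simp: mult.commute mult.left_commute intro!: sum.cong)
  also have "\<dots> = a * complex_of_real r"
    unfolding r_def of_real_sum sum_distrib_left by (intro sum.cong refl) (metis complex_norm_square mult.commute)
  finally have s1: "s = a * complex_of_real r" .
  have "cnj s = (\<Sum>i<n. \<Sum>j<n. v $ i * complex_of_real (A $$ (i,j)) * cnj (v $ j))"
    unfolding s_def by (simp add: cnj_sum)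
  also have "\<dots> = (\<Sum>j<n. \<Sum>i<n. v $ i * complex_of_real (A $$ (i,j)) * cnj (v $ j))"
    by (rule sum.swap)
  also have "\<dots> = s" unfolding s_def
    by (auto intro!: sum.cong simp: sym mult.commute mult.left_commute)
  finally have "Im s = 0" by (metis cnj.simps(2) neg_equal_zero)
  moreover have "r > 0"
  proof -
    obtain i where i: "i < n" "v $ i \<noteq> 0" using v v0 by (metis eq_vecI carrier_vecD index_zero_vec)
    have "r \<ge> (cmod (v $ i))^2" unfolding r_def
      by (rule member_le_sum) (use i in auto)
    moreover have "(cmod (v $ i))^2 > 0" using i by simp
    ultimately show ?thesis by linarith
  qed
  ultimately have "Im a = 0" using s1 by simp
  then have aeq: "a = complex_of_real (Re a)" by (simp add: complex_eq_iff)
  have "char_poly Ac = map_poly complex_of_real (char_poly A)"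
    unfolding Ac_def by (rule of_real_hom.char_poly_hom[OF A])
  then have "complex_of_real (poly (char_poly A) (Re a)) = 0"
    using \<open>poly (char_poly Ac) a = 0\<close> aeq by (metis of_real_hom.poly_map_poly)
  then have "poly (char_poly A) (Re a) = 0" by simp
  then show ?thesis using eigenvalue_root_char_poly[OF A] by blast
qed

lemma real_conjugate_vec[simp]: "conjugate (v :: real vec) = v"
  by (rule eq_vecI) auto

lemma orth_complete:
  fixes u :: "real vec"
  assumes u: "u \<in> carrier_vec n" and uu: "u \<bullet> u = 1"
  shows "\<exists>W. W \<in> carrier_mat n n \<and> transpose_mat W * W = 1\<^sub>m n \<and> col W 0 = u"
proof -
  interpret cof_vec_space n "TYPE(real)" .
  have u0: "u \<noteq> 0\<^sub>v n" using uu u by auto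
  define b where "b = basis_completion u"
  define ws where "ws = gram_schmidt n b"
  from basis_completion[OF u u0, folded b_def]
  have dist_b: "distinct b" and indep: "\<not> lin_dep (set b)" and b: "set b \<subseteq> carrier_vec n"
    and hdb: "hd b = u" and len_b: "length b = n" by auto
  have n: "n > 0" using u0 u by (cases n) auto
  from hdb len_b n obtain vs where bv: "b = u # vs" by (cases b, auto)
  from gram_schmidt_result[OF b dist_b indep refl, folded ws_def]
  have ws: "set ws \<subseteq> carrier_vec n" "corthogonal ws" "length ws = n"
    by (auto simp: len_b)
  from gram_schmidt_hd[OF u, of vs, folded bv] have hdws: "hd ws = u" unfolding ws_def .
  define nz where "nz = (\<lambda>w::real vec. (1 / sqrt (w \<bullet> w)) \<cdot>\<^sub>v w)"
  define ws' where "ws' = map nz ws"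
  define W where "W = mat_of_cols n ws'"
  have ws'c: "\<And>i. i < n \<Longrightarrow> ws' ! i \<in> carrier_vec n" "length ws' = n"
    using ws by (auto simp: ws'_def nz_def)
  have W: "W \<in> carrier_mat n n" using ws'c unfolding W_def by (metis mat_of_cols_carrier(1))
  have colW: "\<And>i. i < n \<Longrightarrow> col W i = ws' ! i" unfolding W_def using ws'c by simp
  have pos: "\<And>i. i < n \<Longrightarrow> ws ! i \<bullet> ws ! i > 0"
  proof -
    fix i assume i: "i < n"
    have "ws ! i \<bullet> ws ! i \<noteq> 0" using corthogonalD[OF ws(2), of i i] i ws by auto
    moreover have "ws ! i \<bullet> ws ! i \<ge> 0" using conjugate_square_ge_0_vec[of "ws ! i"] by simp
    ultimately show "ws ! i \<bullet> ws ! i > 0" by linarith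
  qed
  have orth: "\<And>i j. i < n \<Longrightarrow> j < n \<Longrightarrow> ws' ! i \<bullet> ws' ! j = (if i = j then 1 else 0)"
  proof -
    fix i j assume i: "i < n" and j: "j < n"
    have ci: "ws ! i \<in> carrier_vec n" and cj: "ws ! j \<in> carrier_vec n" using ws i j by auto
    have "ws' ! i \<bullet> ws' ! j = (1 / sqrt (ws!i \<bullet> ws!i)) * (1 / sqrt (ws!j \<bullet> ws!j)) * (ws ! i \<bullet> ws ! j)"
      using ci cj i j ws by (simp add: ws'_def nz_def)
    also have "\<dots> = (if i = j then 1 else 0)"
    proof (cases "i = j")
      case True
      have p: "ws ! i \<bullet> ws ! i > 0" using pos i by auto
      then show ?thesis using True by (simp add: real_sqrt_mult[symmetric] del: real_sqrt_mult)
    next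
      case False
      then have "ws ! i \<bullet> ws ! j = 0" using corthogonalD[OF ws(2), of i j] i j ws by auto
      then show ?thesis using False by simp
    qed
    finally show "ws' ! i \<bullet> ws' ! j = (if i = j then 1 else 0)" .
  qed
  have "transpose_mat W * W = 1\<^sub>m n"
    by (rule eq_matI) (use W in \<open>auto simp: colW orth\<close>)
  moreover have "col W 0 = u"
  proof -
    have "ws ! 0 = u" using hdws ws n by (cases ws) auto
    then have "ws' ! 0 = u" using ws n uu by (simp add: ws'_def nz_def)
    then show ?thesis using colW n by simp
  qed
  ultimately show ?thesis using W by blast
qed

lemma entry_WtAW:
  fixes W A :: "real mat"
  assumes W: "W \<in> carrier_mat n n" and A: "A \<in> carrier_mat n n" and i: "i < n" and j: "j < n"
  shows "(transpose_mat W * A * W) $$ (i,j) = col W i \<bullet> (A *\<^sub>v col W j)"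
proof -
  have "transpose_mat W * A * W = transpose_mat W * (A * W)"
    using W A by (simp add: assoc_mult_mat[of _ n n _ n _ n])
  moreover have "(transpose_mat W * (A * W)) $$ (i,j) = row (transpose_mat W) i \<bullet> col (A * W) j"
    using W A i j by (intro index_mult_mat(1)) auto
  moreover have "row (transpose_mat W) i = col W i" using W i by (intro row_transpose) auto
  moreover have "col (A * W) j = A *\<^sub>v col W j" using W A j by (intro col_mult2) auto
  ultimately show ?thesis by simp
qed

lemma sym_diag:
  fixes A :: "real mat"
  assumes "A \<in> carrier_mat n n" "transpose_mat A = A"
  shows "\<exists>Q f. Q \<in> carrier_mat n n \<and> transpose_mat Q * Q = 1\<^sub>m n \<and>
     transpose_mat Q * A * Q = mat n n (\<lambda>(i,j). if i = j then f i else 0)"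
  using assms
proof (induct n arbitrary: A)
  case 0
  show ?case
    by (rule exI[of _ "1\<^sub>m 0"], rule exI[of _ "\<lambda>_. 0"]) (auto intro!: eq_matI)
next
  case (Suc m A)
  let ?n = "Suc m"
  have A: "A \<in> carrier_mat ?n ?n" using Suc by auto
  have symA: "\<And>i j. i < ?n \<Longrightarrow> j < ?n \<Longrightarrow> A $$ (i,j) = A $$ (j,i)"
    using Suc(3) A by (metis carrier_matD index_transpose_mat(1))
  obtain e where "eigenvalue A e" using sym_real_eigenvalue[OF A symA] by auto
  then obtain v where "eigenvector A v e" unfolding eigenvalue_def by blast
  then have v: "v \<in> carrier_vec ?n" and v0: "v \<noteq> 0\<^sub>v ?n" and Av: "A *\<^sub>v v = e \<cdot>\<^sub>v v"
    using A unfolding eigenvector_def by auto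
  have vv: "v \<bullet> v > 0"
  proof -
    have "v \<bullet> v \<noteq> 0" using v v0 conjugate_square_eq_0_vec[OF v] by auto
    moreover have "v \<bullet> v \<ge> 0" using conjugate_square_ge_0_vec[of v] by simp
    ultimately show ?thesis by linarith
  qed
  define u where "u = (1 / sqrt (v \<bullet> v)) \<cdot>\<^sub>v v"
  have u: "u \<in> carrier_vec ?n" using v by (simp add: u_def)
  have uu: "u \<bullet> u = 1" using v vv by (simp add: u_def real_sqrt_mult[symmetric] del: real_sqrt_mult)
  have Au: "A *\<^sub>v u = e \<cdot>\<^sub>v u" using A v Av by (simp add: u_def mult_mat_vec smult_smult_assoc mult.commute)
  obtain W where W: "W \<in> carrier_mat ?n ?n" and WW: "transpose_mat W * W = 1\<^sub>m ?n" and W0: "col W 0 = u"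
    using orth_complete[OF u uu] by blast
  define A' where "A' = transpose_mat W * A * W"
  have A': "A' \<in> carrier_mat ?n ?n" using W A by (simp add: A'_def)
  have A'e: "\<And>i j. i < ?n \<Longrightarrow> j < ?n \<Longrightarrow> A' $$ (i,j) = col W i \<bullet> (A *\<^sub>v col W j)"
    unfolding A'_def using entry_WtAW[OF W A] by blast
  have cWW: "\<And>i j. i < ?n \<Longrightarrow> j < ?n \<Longrightarrow> col W i \<bullet> col W j = (if i = j then 1 else 0)"
  proof -
    fix i j assume i: "i < ?n" and j: "j < ?n"
    have "(transpose_mat W * W) $$ (i,j) = col W i \<bullet> col W j" using W i j by simp
    then show "col W i \<bullet> col W j = (if i = j then 1 else 0)" using WW i j by simp
  qed
  have symA': "transpose_mat A' = A'"
    unfolding A'_def using W A Suc(3)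
    by (simp add: transpose_mult[of _ ?n ?n _ ?n] assoc_mult_mat[of _ ?n ?n _ ?n _ ?n])
  have symA'e: "\<And>i j. i < ?n \<Longrightarrow> j < ?n \<Longrightarrow> A' $$ (i,j) = A' $$ (j,i)"
    using symA' A' by (metis carrier_matD index_transpose_mat(1))
  have col0: "\<And>i. i < ?n \<Longrightarrow> A' $$ (i,0) = (if i = 0 then e else 0)"
  proof -
    fix i assume i: "i < ?n"
    have "A' $$ (i,0) = col W i \<bullet> (e \<cdot>\<^sub>v col W 0)" using A'e[OF i] W0 Au by simp
    also have "\<dots> = e * (col W i \<bullet> col W 0)" using W i by simp
    finally show "A' $$ (i,0) = (if i = 0 then e else 0)" using cWW[OF i, of 0] by simp
  qed
  define A3 where "A3 = mat m m (\<lambda>(i,j). A' $$ (Suc i, Suc j))"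
  have A3: "A3 \<in> carrier_mat m m" by (simp add: A3_def)
  have symA3: "transpose_mat A3 = A3"
    by (rule eq_matI) (auto simp: A3_def symA'e)
  obtain Q3 f3 where Q3: "Q3 \<in> carrier_mat m m" and QQ3: "transpose_mat Q3 * Q3 = 1\<^sub>m m"
    and D3: "transpose_mat Q3 * A3 * Q3 = mat m m (\<lambda>(i,j). if i = j then f3 i else 0)"
    using Suc(1)[OF A3 symA3] by blast
  define E where "E = mat 1 1 (\<lambda>_. e)"
  have E: "E \<in> carrier_mat 1 1" by (simp add: E_def)
  have A'b: "A' = four_block_mat E (0\<^sub>m 1 m) (0\<^sub>m m 1) A3"
  proof (rule eq_matI)
    fix i j assume i: "i < dim_row (four_block_mat E (0\<^sub>m 1 m) (0\<^sub>m m 1) A3)"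
      and j: "j < dim_col (four_block_mat E (0\<^sub>m 1 m) (0\<^sub>m m 1) A3)"
    then have i': "i < ?n" and j': "j < ?n" using E A3 by auto
    show "A' $$ (i, j) = four_block_mat E (0\<^sub>m 1 m) (0\<^sub>m m 1) A3 $$ (i, j)"
      using i' j' col0 symA'e E A3 by (auto simp: E_def A3_def) (metis col0 symA'e less_not_refl2 zero_less_Suc)+
  qed (use A' E A3 in auto)
  define Q' where "Q' = four_block_mat (1\<^sub>m 1) (0\<^sub>m 1 m) (0\<^sub>m m 1) Q3"
  have Q': "Q' \<in> carrier_mat ?n ?n" using Q3 four_block_carrier_mat[of "1\<^sub>m 1" 1 1 Q3 m m] by (simp add: Q'_def)
  have Q't: "transpose_mat Q' = four_block_mat (1\<^sub>m 1) (0\<^sub>m 1 m) (0\<^sub>m m 1) (transpose_mat Q3)"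
    unfolding Q'_def using Q3 by (simp add: transpose_four_block_mat[of _ 1 1 _ m _ m])
  have c1: "(1\<^sub>m 1 :: real mat) \<in> carrier_mat 1 1" and c2: "(0\<^sub>m 1 m :: real mat) \<in> carrier_mat 1 m"
    and c3: "(0\<^sub>m m 1 :: real mat) \<in> carrier_mat m 1" and Q3t: "transpose_mat Q3 \<in> carrier_mat m m"
    using Q3 by auto
  have Q'Q': "transpose_mat Q' * Q' = 1\<^sub>m ?n"
    unfolding Q't unfolding Q'_def mult_four_block_mat[OF c1 c2 c3 Q3t c1 c2 c3 Q3] using Q3
    by (auto simp: QQ3)
  have "transpose_mat Q' * A' = four_block_mat E (0\<^sub>m 1 m) (0\<^sub>m m 1) (transpose_mat Q3 * A3)"
    unfolding Q't A'b mult_four_block_mat[OF c1 c2 c3 Q3t E c2 c3 A3] using Q3 A3 E by auto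
  also have "\<dots> * Q' = four_block_mat E (0\<^sub>m 1 m) (0\<^sub>m m 1) (transpose_mat Q3 * A3 * Q3)"
    unfolding Q'_def using Q3 A3 E mult_four_block_mat[OF E c2 c3 _ c1 c2 c3 Q3, of "transpose_mat Q3 * A3"]
    by auto
  finally have Q'A'Q': "transpose_mat Q' * A' * Q' = four_block_mat E (0\<^sub>m 1 m) (0\<^sub>m m 1) (transpose_mat Q3 * A3 * Q3)" .
  define Q where "Q = W * Q'"
  define f where "f = (\<lambda>i. if i = 0 then e else f3 (i - 1))"
  have Q: "Q \<in> carrier_mat ?n ?n" using W Q' by (simp add: Q_def)
  have "transpose_mat Q * Q = transpose_mat Q' * (transpose_mat W * W) * Q'"
    unfolding Q_def using W Q'
    by (simp add: transpose_mult[of _ ?n ?n _ ?n] assoc_mult_mat[of _ ?n ?n _ ?n _ ?n])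
  then have QQ: "transpose_mat Q * Q = 1\<^sub>m ?n" using WW Q'Q' Q' by simp
  have "transpose_mat Q * A * Q = transpose_mat Q' * A' * Q'"
    unfolding Q_def A'_def using W Q' A
    by (simp add: transpose_mult[of _ ?n ?n _ ?n] assoc_mult_mat[of _ ?n ?n _ ?n _ ?n])
  also have "\<dots> = mat ?n ?n (\<lambda>(i,j). if i = j then f i else 0)"
    unfolding Q'A'Q' D3
    by (rule eq_matI) (auto simp: E_def f_def)
  finally show ?case using Q QQ by blast
qed

definition dmat :: "nat \<Rightarrow> (nat \<Rightarrow> real) \<Rightarrow> real mat" where
  "dmat n f = mat n n (\<lambda>(i,j). if i = j then f i else 0)"

lemma order_linear_factor: "Polynomial.order x [:-a, 1:] = (if x = a then 1 else (0::nat))"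
proof (cases "x = a")
  case True then show ?thesis using order_power_n_n[of a 1] by simp
next
  case False then show ?thesis by (simp add: order_0I)
qed

lemma prod_linear_order:
  fixes f :: "nat \<Rightarrow> real"
  shows "prod_list (map (\<lambda>a. [:- a, 1:]) (map f [0..<n])) \<noteq> 0 \<and>
    Polynomial.order x (prod_list (map (\<lambda>a. [:- a, 1:]) (map f [0..<n]))) = card {i. i < n \<and> f i = x} \<and>
    (poly (prod_list (map (\<lambda>a. [:- a, 1:]) (map f [0..<n]))) x = 0 \<longleftrightarrow> (\<exists>i<n. f i = x))"
proof (induct n)
  case 0 then show ?case by simp
next
  case (Suc n)
  let ?p = "prod_list (map (\<lambda>a. [:- a, 1:]) (map f [0..<n]))"
  have eq: "prod_list (map (\<lambda>a. [:- a, 1:]) (map f [0..<Suc n])) = ?p * [:- f n, 1:]" by simp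
  have nz: "?p * [:- f n, 1:] \<noteq> 0" using Suc by (metis mult_eq_0_iff pCons_eq_0_iff one_neq_zero)
  have "{i. i < Suc n \<and> f i = x} = {i. i < n \<and> f i = x} \<union> (if f n = x then {n} else {})" by (auto simp: less_Suc_eq)
  then have card: "card {i. i < Suc n \<and> f i = x} = card {i. i < n \<and> f i = x} + (if f n = x then 1 else 0)"
    by auto
  have "Polynomial.order x (?p * [:- f n, 1:]) = Polynomial.order x ?p + Polynomial.order x [:- f n, 1:]"
    by (rule order_mult[OF nz])
  then have o: "Polynomial.order x (?p * [:- f n, 1:]) = card {i. i < Suc n \<and> f i = x}"
    using Suc card by (simp add: order_linear_factor eq_commute[of x])
  have "poly (?p * [:- f n, 1:]) x = 0 \<longleftrightarrow> (\<exists>i<Suc n. f i = x)"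
    using Suc by (auto simp: less_Suc_eq)
  then show ?case unfolding eq using nz o by blast
qed

lemma diag_counts:
  fixes A Q :: "real mat"
  assumes A: "A \<in> carrier_mat n n" and Q: "Q \<in> carrier_mat n n"
    and QQ: "transpose_mat Q * Q = 1\<^sub>m n" and D: "transpose_mat Q * A * Q = dmat n f"
  shows "n_pos A = card {i. i < n \<and> f i > 0}" "n_neg A = card {i. i < n \<and> f i < 0}"
    "n_zero A = card {i. i < n \<and> f i = 0}"
proof -
  have Qt: "transpose_mat Q \<in> carrier_mat n n" using Q by simp
  have QQ': "Q * transpose_mat Q = 1\<^sub>m n" using mat_mult_left_right_inverse[OF Qt Q QQ] .
  have Dc: "dmat n f \<in> carrier_mat n n" by (simp add: dmat_def)
  have "Q * dmat n f * transpose_mat Q = (Q * transpose_mat Q) * A * (Q * transpose_mat Q)"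
    unfolding D[symmetric] using A Q Qt
    by (simp add: assoc_mult_mat[of _ n n _ n _ n])
  then have AQ: "A = Q * dmat n f * transpose_mat Q" using QQ' A by simp
  have "similar_mat A (dmat n f)"
    unfolding similar_mat_def similar_mat_wit_def using AQ QQ QQ' A Q Qt Dc
    by (intro exI[of _ Q] exI[of _ "transpose_mat Q"]) (auto simp: Let_def)
  then have "char_poly A = char_poly (dmat n f)" by (rule char_poly_similar)
  also have "\<dots> = prod_list (map (\<lambda>a. [:- a, 1:]) (diag_mat (dmat n f)))"
    by (rule char_poly_upper_triangular[OF Dc]) (auto simp: upper_triangular_def dmat_def)
  also have "diag_mat (dmat n f) = map f [0..<n]"
    by (auto simp: diag_mat_def dmat_def intro!: nth_equalityI)
  finally have cp: "char_poly A = prod_list (map (\<lambda>a. [:- a, 1:]) (map f [0..<n]))"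
    by simp
  note pl = prod_linear_order[of f n, folded cp]
  have gen: "(\<Sum>x\<in>{x. P x \<and> poly (char_poly A) x = 0}. Polynomial.order x (char_poly A)) = card {i. i < n \<and> P (f i)}"
    for P
  proof -
    have "{x. P x \<and> poly (char_poly A) x = 0} = f ` {i. i < n \<and> P (f i)}"
      using pl by auto
    then have "(\<Sum>x\<in>{x. P x \<and> poly (char_poly A) x = 0}. Polynomial.order x (char_poly A))
       = (\<Sum>x\<in>f ` {i. i < n \<and> P (f i)}. card {i. i < n \<and> f i = x})"
      using pl by (intro sum.cong) auto
    also have "\<dots> = (\<Sum>x\<in>f ` {i. i < n \<and> P (f i)}. card {i. i \<in> {i. i < n \<and> P (f i)} \<and> f i = x})"
      by (intro sum.cong refl arg_cong[where f=card]) auto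
    also have "\<dots> = (\<Sum>x\<in>f ` {i. i < n \<and> P (f i)}. \<Sum>i\<in>{i. i \<in> {i. i < n \<and> P (f i)} \<and> f i = x}. 1)"
      by simp
    also have "\<dots> = (\<Sum>i\<in>{i. i < n \<and> P (f i)}. 1)"
      by (rule sum.group) auto
    finally show ?thesis by simp
  qed
  show "n_pos A = card {i. i < n \<and> f i > 0}" unfolding n_pos_def using gen[of "\<lambda>x. x > 0"] by simp
  show "n_neg A = card {i. i < n \<and> f i < 0}" unfolding n_neg_def using gen[of "\<lambda>x. x < 0"] by simp
  show "n_zero A = card {i. i < n \<and> f i = 0}" unfolding n_zero_def using pl by simp
qed

lemma ker_nat:
  fixes w :: "nat \<Rightarrow> nat \<Rightarrow> real"
  assumes mk: "m < k"
  shows "\<exists>c. (\<exists>j<k. c j \<noteq> 0) \<and> (\<forall>r<m. (\<Sum>j<k. c j * w r j) = 0)"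
proof -
  define M where "M = mat\<^sub>r k k (\<lambda>r. if r = m then 0\<^sub>v k else vec k (\<lambda>j. w r j))"
  have M: "M \<in> carrier_mat k k" by (simp add: M_def)
  have "det M = 0" unfolding M_def
    by (rule det_row_0[OF mk]) auto
  then obtain v where v: "v \<in> carrier_vec k" "v \<noteq> 0\<^sub>v k" "M *\<^sub>v v = 0\<^sub>v k"
    using det_0_iff_vec_prod_zero[OF M] by blast
  have "\<exists>j<k. v $ j \<noteq> 0" using v by (metis eq_vecI carrier_vecD index_zero_vec)
  moreover have "\<forall>r<m. (\<Sum>j<k. v $ j * w r j) = 0"
  proof (intro allI impI)
    fix r assume r: "r < m"
    have "(M *\<^sub>v v) $ r = 0" using v r mk by simp
    moreover have "(M *\<^sub>v v) $ r = row M r \<bullet> v" using M r mk by simp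
    moreover have "row M r = vec k (\<lambda>j. w r j)" using r mk by (simp add: M_def)
    ultimately show "(\<Sum>j<k. v $ j * w r j) = 0" using v
      by (simp add: scalar_prod_def lessThan_atLeast0 mult.commute)
  qed
  ultimately show ?thesis by blast
qed

lemma ker_gen:
  fixes w :: "'j \<Rightarrow> 's \<Rightarrow> real"
  assumes J: "finite J" and S: "finite S" and lt: "card S < card J"
  shows "\<exists>c. (\<exists>j\<in>J. c j \<noteq> 0) \<and> (\<forall>s\<in>S. (\<Sum>j\<in>J. c j * w j s) = 0)"
proof -
  obtain hJ where hJ: "bij_betw hJ {0..<card J} J" using ex_bij_betw_nat_finite[OF J] by blast
  obtain hS where hS: "bij_betw hS {0..<card S} S" using ex_bij_betw_nat_finite[OF S] by blast
  obtain c where c: "\<exists>j<card J. c j \<noteq> 0" "\<forall>r<card S. (\<Sum>j<card J. c j * w (hJ j) (hS r)) = 0"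
    using ker_nat[OF lt, of "\<lambda>r j. w (hJ j) (hS r)"] by blast
  define c' where "c' = (\<lambda>x. c (the_inv_into {0..<card J} hJ x))"
  have c'h: "\<And>j. j < card J \<Longrightarrow> c' (hJ j) = c j"
    unfolding c'_def using hJ by (simp add: bij_betw_def the_inv_into_f_f)
  have sumeq: "\<And>s. (\<Sum>j\<in>J. c' j * w j s) = (\<Sum>j<card J. c j * w (hJ j) s)"
  proof -
    fix s
    have "(\<Sum>j\<in>J. c' j * w j s) = (\<Sum>j\<in>{0..<card J}. c' (hJ j) * w (hJ j) s)"
      by (rule sum.reindex_bij_betw[OF hJ, symmetric])
    also have "\<dots> = (\<Sum>j<card J. c j * w (hJ j) s)"
      by (auto simp: lessThan_atLeast0 c'h intro!: sum.cong)
    finally show "(\<Sum>j\<in>J. c' j * w j s) = (\<Sum>j<card J. c j * w (hJ j) s)" .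
  qed
  have "\<exists>j\<in>J. c' j \<noteq> 0"
  proof -
    obtain j where "j < card J" "c j \<noteq> 0" using c by blast
    then show ?thesis using c'h hJ by (metis atLeastLessThan_iff bij_betwE zero_le)
  qed
  moreover have "\<forall>s\<in>S. (\<Sum>j\<in>J. c' j * w j s) = 0"
  proof
    fix s assume "s \<in> S"
    then obtain r where "r < card S" "s = hS r" using hS
      by (metis atLeastLessThan_iff bij_betw_iff_bijections)
    then show "(\<Sum>j\<in>J. c' j * w j s) = 0" using c sumeq by simp
  qed
  ultimately show ?thesis by blast
qed

definition qf :: "nat \<Rightarrow> real mat \<Rightarrow> (nat \<Rightarrow> real) \<Rightarrow> real" where
  "qf n A x = (\<Sum>i<n. \<Sum>j<n. A $$ (i,j) * x i * x j)"
definition yc :: "nat \<Rightarrow> real mat \<Rightarrow> (nat \<Rightarrow> real) \<Rightarrow> nat \<Rightarrow> real" where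
  "yc n Q x k = (\<Sum>i<n. Q $$ (i,k) * x i)"
definition nrm :: "nat \<Rightarrow> (nat \<Rightarrow> real) \<Rightarrow> real" where
  "nrm n x = (\<Sum>i<n. (x i)^2)"

lemma yc_lin: "finite J \<Longrightarrow> yc n Q (\<lambda>i. \<Sum>j\<in>J. c j * v j i) k = (\<Sum>j\<in>J. c j * yc n Q (v j) k)"
proof -
  have "(\<Sum>i<n. Q $$ (i,k) * (\<Sum>j\<in>J. c j * v j i)) = (\<Sum>i<n. \<Sum>j\<in>J. c j * (Q $$ (i,k) * v j i))"
    by (simp add: sum_distrib_left mult.left_commute)
  also have "\<dots> = (\<Sum>j\<in>J. \<Sum>i<n. c j * (Q $$ (i,k) * v j i))" by (rule sum.swap)
  also have "\<dots> = (\<Sum>j\<in>J. c j * (\<Sum>i<n. Q $$ (i,k) * v j i))" by (simp add: sum_distrib_left)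
  finally show ?thesis unfolding yc_def .
qed

lemma swap3: "(\<Sum>i\<in>I. \<Sum>j\<in>K. \<Sum>k\<in>L. g i j k) = (\<Sum>k\<in>L. \<Sum>i\<in>I. \<Sum>j\<in>K. (g i j k :: real))"
proof -
  have "(\<Sum>i\<in>I. \<Sum>j\<in>K. \<Sum>k\<in>L. g i j k) = (\<Sum>i\<in>I. \<Sum>k\<in>L. \<Sum>j\<in>K. g i j k)"
    by (intro sum.cong refl sum.swap)
  also have "\<dots> = (\<Sum>k\<in>L. \<Sum>i\<in>I. \<Sum>j\<in>K. g i j k)" by (rule sum.swap)
  finally show ?thesis .
qed

lemma sq_sum2: "(\<Sum>i\<in>I. a i)^2 = (\<Sum>i\<in>I. \<Sum>j\<in>I. a i * (a j :: real))"
  by (simp only: power2_eq_square sum_product)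

lemma sq_sum: "(c::real) * (\<Sum>i\<in>I. a i)^2 = (\<Sum>i\<in>I. \<Sum>j\<in>I. c * (a i * a j))"
  by (simp only: sq_sum2 sum_distrib_left)

lemma card_split: "card {k. k < n \<and> P k} + card {k. k < n \<and> \<not> P k} = n"
proof -
  have "card ({k. k < n \<and> P k} \<union> {k. k < n \<and> \<not> P k}) = card {k. k < n \<and> P k} + card {k. k < n \<and> \<not> P k}"
    by (rule card_Un_disjoint) auto
  moreover have "{k. k < n \<and> P k} \<union> {k. k < n \<and> \<not> P k} = {..<n}" by auto
  ultimately show ?thesis by simp
qed

lemma core_LB:
  fixes v :: "'j \<Rightarrow> nat \<Rightarrow> real" and g :: "nat \<Rightarrow> real"
  assumes J: "finite J"
    and neg: "\<And>c. (\<exists>j\<in>J. c j \<noteq> 0) \<Longrightarrow> (\<Sum>k<n. g k * (yc n Q (\<lambda>i. \<Sum>j\<in>J. c j * v j i) k)^2) < 0"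
  shows "card J \<le> card {k. k < n \<and> g k < 0}"
proof (rule ccontr)
  assume "\<not> ?thesis"
  then have lt: "card {k. k < n \<and> g k < 0} < card J" by simp
  obtain c where c: "\<exists>j\<in>J. c j \<noteq> 0" and cs: "\<forall>s\<in>{k. k < n \<and> g k < 0}. (\<Sum>j\<in>J. c j * yc n Q (v j) s) = 0"
    using ker_gen[OF J _ lt, of "\<lambda>j s. yc n Q (v j) s"] by auto
  have "(\<Sum>k<n. g k * (yc n Q (\<lambda>i. \<Sum>j\<in>J. c j * v j i) k)^2) \<ge> 0"
  proof (rule sum_nonneg)
    fix k assume k: "k \<in> {..<n}"
    show "g k * (yc n Q (\<lambda>i. \<Sum>j\<in>J. c j * v j i) k)^2 \<ge> 0"
    proof (cases "g k < 0")
      case True then show ?thesis using cs k by (simp add: yc_lin[OF J])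
    next
      case False then show ?thesis by simp
    qed
  qed
  with neg[OF c] show False by simp
qed

locale diagd =
  fixes n :: nat and A Q :: "real mat" and f :: "nat \<Rightarrow> real"
  assumes A: "A \<in> carrier_mat n n" and Q: "Q \<in> carrier_mat n n"
    and QQ: "transpose_mat Q * Q = 1\<^sub>m n" and D: "transpose_mat Q * A * Q = dmat n f"
begin

lemma QQ': "Q * transpose_mat Q = 1\<^sub>m n"
  using mat_mult_left_right_inverse[OF _ Q QQ] Q by simp

lemma AQ: "A = Q * dmat n f * transpose_mat Q"
proof -
  have Qt: "transpose_mat Q \<in> carrier_mat n n" using Q by simp
  have "Q * dmat n f * transpose_mat Q = (Q * transpose_mat Q) * A * (Q * transpose_mat Q)"
    unfolding D[symmetric] using A Q Qt
    by (simp add: assoc_mult_mat[of _ n n _ n _ n])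
  then show ?thesis using QQ' A by simp
qed

lemma orth2: "i < n \<Longrightarrow> j < n \<Longrightarrow> (\<Sum>k<n. Q $$ (i,k) * Q $$ (j,k)) = (if i = j then 1 else 0)"
proof -
  assume i: "i < n" and j: "j < n"
  have "(Q * transpose_mat Q) $$ (i,j) = (\<Sum>k<n. Q $$ (i,k) * Q $$ (j,k))"
    using Q i j by (simp add: scalar_prod_def lessThan_atLeast0)
  then show ?thesis using QQ' i j by simp
qed

lemma orth1: "i < n \<Longrightarrow> j < n \<Longrightarrow> (\<Sum>k<n. Q $$ (k,i) * Q $$ (k,j)) = (if i = j then 1 else 0)"
proof -
  assume i: "i < n" and j: "j < n"
  have "(transpose_mat Q * Q) $$ (i,j) = (\<Sum>k<n. Q $$ (k,i) * Q $$ (k,j))"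
    using Q i j by (simp add: scalar_prod_def lessThan_atLeast0)
  then show ?thesis using QQ i j by simp
qed

lemma Aent: "i < n \<Longrightarrow> j < n \<Longrightarrow> A $$ (i,j) = (\<Sum>k<n. Q $$ (i,k) * f k * Q $$ (j,k))"
proof -
  assume i: "i < n" and j: "j < n"
  have QD: "\<And>l. l < n \<Longrightarrow> (Q * dmat n f) $$ (i,l) = Q $$ (i,l) * f l"
  proof -
    fix l assume l: "l < n"
    have "(Q * dmat n f) $$ (i,l) = (\<Sum>k<n. Q $$ (i,k) * (if k = l then f k else 0))"
      using Q i l by (simp add: scalar_prod_def lessThan_atLeast0 dmat_def)
    also have "\<dots> = (\<Sum>k<n. (if k = l then Q $$ (i,l) * f l else 0))"
      by (rule sum.cong) auto
    also have "\<dots> = Q $$ (i,l) * f l"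
      using l by (simp add: sum.delta')
    finally show "(Q * dmat n f) $$ (i,l) = Q $$ (i,l) * f l" .
  qed
  have "A $$ (i,j) = (\<Sum>l<n. (Q * dmat n f) $$ (i,l) * Q $$ (j,l))"
    using Q i j by (subst AQ) (simp add: scalar_prod_def lessThan_atLeast0 dmat_def)
  also have "\<dots> = (\<Sum>k<n. Q $$ (i,k) * f k * Q $$ (j,k))" by (simp add: QD)
  finally show ?thesis .
qed

lemma F1: "qf n A x = (\<Sum>k<n. f k * (yc n Q x k)^2)"
proof -
  have "qf n A x = (\<Sum>i<n. \<Sum>j<n. \<Sum>k<n. Q $$ (i,k) * f k * Q $$ (j,k) * x i * x j)"
    unfolding qf_def by (intro sum.cong refl) (simp add: Aent sum_distrib_right)
  also have "\<dots> = (\<Sum>k<n. \<Sum>i<n. \<Sum>j<n. Q $$ (i,k) * f k * Q $$ (j,k) * x i * x j)"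
    by (rule swap3)
  also have "\<dots> = (\<Sum>k<n. f k * (yc n Q x k)^2)"
    unfolding yc_def sq_sum by (intro sum.cong refl) (simp add: mult_ac)
  finally show ?thesis .
qed

lemma F2: "i < n \<Longrightarrow> x i = (\<Sum>k<n. Q $$ (i,k) * yc n Q x k)"
proof -
  assume i: "i < n"
  have "(\<Sum>k<n. Q $$ (i,k) * yc n Q x k) = (\<Sum>k<n. \<Sum>j<n. Q $$ (i,k) * Q $$ (j,k) * x j)"
    unfolding yc_def by (simp add: sum_distrib_left mult.assoc)
  also have "\<dots> = (\<Sum>j<n. \<Sum>k<n. Q $$ (i,k) * Q $$ (j,k) * x j)" by (rule sum.swap)
  also have "\<dots> = (\<Sum>j<n. (\<Sum>k<n. Q $$ (i,k) * Q $$ (j,k)) * x j)" by (simp add: sum_distrib_right)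
  also have "\<dots> = (\<Sum>j<n. (if i = j then x j else 0))" using i by (intro sum.cong refl) (simp add: orth2)
  also have "\<dots> = x i" using i by (simp add: sum.delta)
  finally show ?thesis by simp
qed

lemma Fnorm: "nrm n x = (\<Sum>k<n. (yc n Q x k)^2)"
proof -
  have "(\<Sum>k<n. (yc n Q x k)^2) = (\<Sum>k<n. \<Sum>i<n. \<Sum>j<n. Q $$ (i,k) * Q $$ (j,k) * x i * x j)"
    unfolding yc_def sq_sum2 by (intro sum.cong refl) (simp add: mult_ac)
  also have "\<dots> = (\<Sum>i<n. \<Sum>j<n. \<Sum>k<n. Q $$ (i,k) * Q $$ (j,k) * x i * x j)"
    by (rule swap3[symmetric])
  also have "\<dots> = (\<Sum>i<n. \<Sum>j<n. (\<Sum>k<n. Q $$ (i,k) * Q $$ (j,k)) * (x i * x j))"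
    by (simp add: sum_distrib_right mult.assoc)
  also have "\<dots> = (\<Sum>i<n. \<Sum>j<n. (if i = j then x i * x j else 0))"
    by (intro sum.cong refl) (simp add: orth2)
  also have "\<dots> = (\<Sum>i<n. x i * x i)"
    by (simp add: sum.delta)
  finally show ?thesis by (simp add: nrm_def power2_eq_square)
qed

lemma EIG:
  assumes T: "T \<subseteq> {..<n}" and k: "k < n"
  shows "yc n Q (\<lambda>i. \<Sum>l\<in>T. c l * Q $$ (i,l)) k = (if k \<in> T then c k else 0)"
proof -
  have fT: "finite T" using T finite_subset by blast
  have "yc n Q (\<lambda>i. \<Sum>l\<in>T. c l * Q $$ (i,l)) k = (\<Sum>l\<in>T. c l * yc n Q (\<lambda>i. Q $$ (i,l)) k)"
    by (rule yc_lin[OF fT])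
  also have "\<dots> = (\<Sum>l\<in>T. (if k = l then c l else 0))"
    using T k by (intro sum.cong refl) (auto simp: orth1 yc_def)
  also have "\<dots> = (if k \<in> T then c k else 0)"
    using fT by (simp add: sum.delta)
  finally show ?thesis .
qed

lemma core_UB:
  fixes v :: "'j \<Rightarrow> nat \<Rightarrow> real" and g :: "nat \<Rightarrow> real"
  assumes J: "finite J"
    and indep: "\<And>c. (\<forall>i<n. (\<Sum>j\<in>J. c j * v j i) = 0) \<Longrightarrow> (\<forall>j\<in>J. c j = 0)"
    and nn: "\<And>c. (\<Sum>k<n. g k * (yc n Q (\<lambda>i. \<Sum>j\<in>J. c j * v j i) k)^2) \<ge> 0"
  shows "card J \<le> card {k. k < n \<and> g k \<ge> 0}"
proof (rule ccontr)
  assume "\<not> ?thesis"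
  then have lt: "card {k. k < n \<and> g k \<ge> 0} < card J" by simp
  obtain c where c: "\<exists>j\<in>J. c j \<noteq> 0" and cs: "\<forall>s\<in>{k. k < n \<and> g k \<ge> 0}. (\<Sum>j\<in>J. c j * yc n Q (v j) s) = 0"
    using ker_gen[OF J _ lt, of "\<lambda>j s. yc n Q (v j) s"] by auto
  define x where "x = (\<lambda>i. \<Sum>j\<in>J. c j * v j i)"
  have y0: "\<And>k. k < n \<Longrightarrow> g k \<ge> 0 \<Longrightarrow> yc n Q x k = 0" using cs by (simp add: x_def yc_lin[OF J])
  have le: "\<And>k. k \<in> {..<n} \<Longrightarrow> g k * (yc n Q x k)^2 \<le> 0"
  proof -
    fix k assume k: "k \<in> {..<n}"
    show "g k * (yc n Q x k)^2 \<le> 0"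
    proof (cases "g k \<ge> 0")
      case True then show ?thesis using y0 k by simp
    next
      case False then show ?thesis by (simp add: mult_nonpos_nonneg)
    qed
  qed
  have "(\<Sum>k<n. g k * (yc n Q x k)^2) \<le> 0" by (rule sum_nonpos) (use le in auto)
  then have "(\<Sum>k<n. g k * (yc n Q x k)^2) = 0"
    using nn[of c] unfolding x_def by linarith
  then have "(\<Sum>k<n. - (g k * (yc n Q x k)^2)) = 0" by (simp add: sum_negf)
  then have "\<forall>k\<in>{..<n}. - (g k * (yc n Q x k)^2) = 0"
    using sum_nonneg_eq_0_iff[of "{..<n}" "\<lambda>k. - (g k * (yc n Q x k)^2)"] le by force
  then have z: "\<forall>k\<in>{..<n}. g k * (yc n Q x k)^2 = 0" by simp
  have yz: "\<And>k. k < n \<Longrightarrow> yc n Q x k = 0"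
  proof -
    fix k assume k: "k < n"
    show "yc n Q x k = 0"
    proof (cases "g k \<ge> 0")
      case True then show ?thesis using y0 k by simp
    next
      case False then show ?thesis using z[rule_format, of k] k by auto
    qed
  qed
  have "\<forall>i<n. x i = 0" using F2[of _ x] yz by simp
  then have "\<forall>j\<in>J. c j = 0" using indep unfolding x_def by blast
  with c show False by blast
qed

end

lemma sym_diagd:
  assumes A: "A \<in> carrier_mat n n" and s: "transpose_mat A = A"
  shows "\<exists>Q f. diagd n A Q f"
proof -
  obtain Q f where "Q \<in> carrier_mat n n" "transpose_mat Q * Q = 1\<^sub>m n"
     "transpose_mat Q * A * Q = mat n n (\<lambda>(i,j). if i = j then f i else 0)"
    using sym_diag[OF A s] by blast
  then have "diagd n A Q f" using A by unfold_locales (auto simp: dmat_def)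
  then show ?thesis by blast
qed

context diagd begin
lemma counts: "n_pos A = card {i. i < n \<and> f i > 0}" "n_neg A = card {i. i < n \<and> f i < 0}"
    "n_zero A = card {i. i < n \<and> f i = 0}"
  using diag_counts[OF A Q QQ D] by auto
end

lemma sym_LB_neg:
  fixes v :: "'j \<Rightarrow> nat \<Rightarrow> real"
  assumes A: "A \<in> carrier_mat n n" and s: "transpose_mat A = A" and J: "finite J"
    and neg: "\<And>c. (\<exists>j\<in>J. c j \<noteq> 0) \<Longrightarrow> qf n A (\<lambda>i. \<Sum>j\<in>J. c j * v j i) < 0"
  shows "card J \<le> n_neg A"
proof -
  obtain Q f where d: "diagd n A Q f" using sym_diagd[OF A s] by blast
  interpret diagd n A Q f by fact
  show ?thesis unfolding counts
    by (rule core_LB[OF J, where Q=Q and v=v]) (use neg F1 in auto)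
qed

lemma sym_LB_pos:
  fixes v :: "'j \<Rightarrow> nat \<Rightarrow> real"
  assumes A: "A \<in> carrier_mat n n" and s: "transpose_mat A = A" and J: "finite J"
    and pos: "\<And>c. (\<exists>j\<in>J. c j \<noteq> 0) \<Longrightarrow> qf n A (\<lambda>i. \<Sum>j\<in>J. c j * v j i) > 0"
  shows "card J \<le> n_pos A"
proof -
  obtain Q f where d: "diagd n A Q f" using sym_diagd[OF A s] by blast
  interpret diagd n A Q f by fact
  have "card J \<le> card {k. k < n \<and> - f k < 0}"
  proof (rule core_LB[OF J])
    fix c :: "'j \<Rightarrow> real" assume c: "\<exists>j\<in>J. c j \<noteq> 0"
    have "(\<Sum>k<n. - f k * (yc n Q (\<lambda>i. \<Sum>j\<in>J. c j * v j i) k)^2) = - qf n A (\<lambda>i. \<Sum>j\<in>J. c j * v j i)"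
      by (simp add: F1 sum_negf)
    then show "(\<Sum>k<n. - f k * (yc n Q (\<lambda>i. \<Sum>j\<in>J. c j * v j i) k)^2) < 0" using pos[OF c] by simp
  qed
  then show ?thesis unfolding counts by simp
qed

lemma sym_UB_neg:
  fixes v :: "'j \<Rightarrow> nat \<Rightarrow> real"
  assumes A: "A \<in> carrier_mat n n" and s: "transpose_mat A = A" and J: "finite J"
    and indep: "\<And>c. (\<forall>i<n. (\<Sum>j\<in>J. c j * v j i) = 0) \<Longrightarrow> (\<forall>j\<in>J. c j = 0)"
    and nn: "\<And>c. qf n A (\<lambda>i. \<Sum>j\<in>J. c j * v j i) \<ge> 0"
  shows "card J + n_neg A \<le> n"
proof -
  obtain Q f where d: "diagd n A Q f" using sym_diagd[OF A s] by blast
  interpret diagd n A Q f by fact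
  have "card J \<le> card {k. k < n \<and> f k \<ge> 0}"
    by (rule core_UB[OF J indep]) (use nn F1 in auto)
  moreover have "card {k. k < n \<and> f k \<ge> 0} + card {k. k < n \<and> \<not> f k \<ge> 0} = n" by (rule card_split)
  ultimately show ?thesis unfolding counts by (simp add: not_le)
qed

lemma sym_UB_pos:
  fixes v :: "'j \<Rightarrow> nat \<Rightarrow> real"
  assumes A: "A \<in> carrier_mat n n" and s: "transpose_mat A = A" and J: "finite J"
    and indep: "\<And>c. (\<forall>i<n. (\<Sum>j\<in>J. c j * v j i) = 0) \<Longrightarrow> (\<forall>j\<in>J. c j = 0)"
    and np: "\<And>c. qf n A (\<lambda>i. \<Sum>j\<in>J. c j * v j i) \<le> 0"
  shows "card J + n_pos A \<le> n"
proof -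
  obtain Q f where d: "diagd n A Q f" using sym_diagd[OF A s] by blast
  interpret diagd n A Q f by fact
  have "card J \<le> card {k. k < n \<and> - f k \<ge> 0}"
  proof (rule core_UB[OF J indep])
    fix c :: "'j \<Rightarrow> real"
    have "(\<Sum>k<n. - f k * (yc n Q (\<lambda>i. \<Sum>j\<in>J. c j * v j i) k)^2) = - qf n A (\<lambda>i. \<Sum>j\<in>J. c j * v j i)"
      by (simp add: F1 sum_negf)
    then show "(\<Sum>k<n. - f k * (yc n Q (\<lambda>i. \<Sum>j\<in>J. c j * v j i) k)^2) \<ge> 0" using np[of c] by simp
  qed (simp)
  moreover have "card {k. k < n \<and> - f k \<ge> 0} + card {k. k < n \<and> \<not> - f k \<ge> 0} = n" by (rule card_split)
  ultimately show ?thesis unfolding counts by (simp add: not_le)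
qed

lemma sym_sum:
  assumes A: "A \<in> carrier_mat n n" and s: "transpose_mat A = A"
  shows "n_pos A + n_neg A + n_zero A = n"
proof -
  obtain Q f where d: "diagd n A Q f" using sym_diagd[OF A s] by blast
  interpret diagd n A Q f by fact
  have "card {k. k < n \<and> f k > 0} + card {k. k < n \<and> \<not> f k > 0} = n" by (rule card_split)
  moreover have "card {k. k < n \<and> \<not> f k > 0} = card {k. k < n \<and> f k < 0} + card {k. k < n \<and> f k = 0}"
  proof -
    have "card ({k. k < n \<and> f k < 0} \<union> {k. k < n \<and> f k = 0}) = card {k. k < n \<and> f k < 0} + card {k. k < n \<and> f k = 0}"
      by (rule card_Un_disjoint) auto
    moreover have "{k. k < n \<and> f k < 0} \<union> {k. k < n \<and> f k = 0} = {k. k < n \<and> \<not> f k > 0}" by auto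
    ultimately show ?thesis by simp
  qed
  ultimately show ?thesis unfolding counts by simp
qed

lemma zero_pos:
  fixes A :: "real mat"
  assumes A: "A \<in> carrier_mat n n" and v: "v \<in> carrier_vec n" "v \<noteq> 0\<^sub>v n" "A *\<^sub>v v = 0\<^sub>v n"
  shows "n_zero A \<ge> 1"
proof -
  have "eigenvector A v 0" unfolding eigenvector_def using A v by auto
  then have "eigenvalue A 0" unfolding eigenvalue_def by blast
  then have r: "poly (char_poly A) 0 = 0" using eigenvalue_root_char_poly[OF A] by simp
  have "char_poly A \<noteq> 0" using degree_monic_char_poly[OF A] by auto
  then show ?thesis using r order_root[of "char_poly A" 0] unfolding n_zero_def by simp
qed

definition PP :: "nat \<Rightarrow> (nat \<Rightarrow> nat \<Rightarrow> real) \<Rightarrow> (nat \<Rightarrow> real) \<Rightarrow> real" where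
  "PP N \<gamma> x = (\<Sum>i<N. \<Sum>j<N. \<gamma> i j * (x i - x j)^2)"

lemma lap_carrier: "signed_laplacian N \<gamma> \<in> carrier_mat N N"
  by (simp add: signed_laplacian_def)

lemma lap_entry: "i < N \<Longrightarrow> j < N \<Longrightarrow> signed_laplacian N \<gamma> $$ (i,j) =
   (if i = j then - (\<Sum>k\<in>{0..<N}-{i}. \<gamma> i k) else \<gamma> i j)"
  by (simp add: signed_laplacian_def)

lemma lap_sym: "(\<forall>i j. \<gamma> i j = \<gamma> j i) \<Longrightarrow> transpose_mat (signed_laplacian N \<gamma>) = signed_laplacian N \<gamma>"
  by (rule eq_matI) (auto simp: signed_laplacian_def)

lemma lap_row:
  assumes i: "i < N"
  shows "(\<Sum>j<N. signed_laplacian N \<gamma> $$ (i,j) * x i * x j) = (\<Sum>j<N. \<gamma> i j * (x i * x j - x i * x i))"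
proof -
  have fin: "finite {..<N}" by simp
  have iN: "i \<in> {..<N}" using i by simp
  have "(\<Sum>j<N. signed_laplacian N \<gamma> $$ (i,j) * x i * x j) =
     signed_laplacian N \<gamma> $$ (i,i) * x i * x i + (\<Sum>j\<in>{..<N}-{i}. signed_laplacian N \<gamma> $$ (i,j) * x i * x j)"
    by (rule sum.remove[OF fin iN])
  also have "(\<Sum>j\<in>{..<N}-{i}. signed_laplacian N \<gamma> $$ (i,j) * x i * x j) = (\<Sum>j\<in>{..<N}-{i}. \<gamma> i j * x i * x j)"
    using i by (intro sum.cong refl) (auto simp: lap_entry)
  also have "signed_laplacian N \<gamma> $$ (i,i) * x i * x i = - (\<Sum>j\<in>{..<N}-{i}. \<gamma> i j * x i * x i)"
    using i by (simp add: lap_entry sum_distrib_right atLeast0LessThan)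
  finally have "(\<Sum>j<N. signed_laplacian N \<gamma> $$ (i,j) * x i * x j) = (\<Sum>j\<in>{..<N}-{i}. \<gamma> i j * (x i * x j - x i * x i))"
    by (simp add: sum_subtractf[symmetric] algebra_simps)
  also have "\<dots> = (\<Sum>j<N. \<gamma> i j * (x i * x j - x i * x i))"
    using sum.remove[OF fin iN, of "\<lambda>j. \<gamma> i j * (x i * x j - x i * x i)"] by simp
  finally show ?thesis .
qed

lemma lap_qf:
  assumes sym: "\<forall>i j. \<gamma> i j = \<gamma> j i"
  shows "qf N (signed_laplacian N \<gamma>) x = - PP N \<gamma> x / 2"
proof -
  have q: "qf N (signed_laplacian N \<gamma>) x = (\<Sum>i<N. \<Sum>j<N. \<gamma> i j * (x i * x j - x i * x i))"
    unfolding qf_def by (rule sum.cong[OF refl]) (simp add: lap_row)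
  have s1: "(\<Sum>i<N. \<Sum>j<N. \<gamma> i j * (x j * x j)) = (\<Sum>i<N. \<Sum>j<N. \<gamma> i j * (x i * x i))"
  proof -
    have "(\<Sum>i<N. \<Sum>j<N. \<gamma> i j * (x j * x j)) = (\<Sum>j<N. \<Sum>i<N. \<gamma> i j * (x j * x j))" by (rule sum.swap)
    also have "\<dots> = (\<Sum>i<N. \<Sum>j<N. \<gamma> i j * (x i * x i))" using sym by simp
    finally show ?thesis .
  qed
  have "PP N \<gamma> x = (\<Sum>i<N. \<Sum>j<N. \<gamma> i j * (x i * x i) + \<gamma> i j * (x j * x j) - 2 * (\<gamma> i j * (x i * x j)))"
    unfolding PP_def by (intro sum.cong refl) (simp add: power2_eq_square algebra_simps)
  also have "\<dots> = 2 * (\<Sum>i<N. \<Sum>j<N. \<gamma> i j * (x i * x i)) - 2 * (\<Sum>i<N. \<Sum>j<N. \<gamma> i j * (x i * x j))"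
    using s1 by (simp add: sum.distrib sum_subtractf sum_distrib_left)
  also have "\<dots> = - 2 * qf N (signed_laplacian N \<gamma>) x"
    unfolding q by (simp add: sum_subtractf algebra_simps)
  finally show ?thesis by simp
qed

lemma lap_ones:
  assumes N: "N > 0"
  shows "n_zero (signed_laplacian N \<gamma>) \<ge> 1"
proof (rule zero_pos[OF lap_carrier])
  show "vec N (\<lambda>_. 1) \<in> carrier_vec N" by simp
  show "vec N (\<lambda>_. 1::real) \<noteq> 0\<^sub>v N" using N by (metis index_vec index_zero_vec(1) zero_neq_one)
  show "signed_laplacian N \<gamma> *\<^sub>v vec N (\<lambda>_. 1) = 0\<^sub>v N"
  proof (rule eq_vecI)
    fix i assume "i < dim_vec (0\<^sub>v N :: real vec)"
    then have i: "i < N" by simp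
    have "(signed_laplacian N \<gamma> *\<^sub>v vec N (\<lambda>_. 1)) $ i = (\<Sum>j<N. signed_laplacian N \<gamma> $$ (i,j) * 1 * 1)"
      using i lap_carrier[of N \<gamma>] by (simp add: scalar_prod_def lessThan_atLeast0)
    also have "\<dots> = 0" using lap_row[OF i, of \<gamma> "\<lambda>_. 1"] by simp
    finally show "(signed_laplacian N \<gamma> *\<^sub>v vec N (\<lambda>_. 1)) $ i = 0\<^sub>v N $ i" using i by simp
  qed (use lap_carrier[of N \<gamma>] in auto)
qed

definition cl :: "(nat \<Rightarrow> nat \<Rightarrow> bool) \<Rightarrow> nat \<Rightarrow> nat set" where
  "cl R i = {j. R\<^sup>*\<^sup>* i j}"

definition vsum :: "nat set set \<Rightarrow> (nat set \<Rightarrow> real) \<Rightarrow> nat \<Rightarrow> real" where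
  "vsum J c i = (\<Sum>C\<in>J. c C * (if i \<in> C then 1 else 0))"

lemma const_rtranclp:
  assumes h: "\<And>i j. E i j \<Longrightarrow> x i = (x j :: real)" and r: "E\<^sup>*\<^sup>* i j"
  shows "x i = x j"
  using r by (induct rule: rtranclp_induct) (use h in auto)

lemma quot_eq: "{0..<N} // {(i,j). R\<^sup>*\<^sup>* i j} = cl R ` {0..<N}"
  unfolding quotient_def cl_def by auto

locale rel_in =
  fixes N :: nat and R :: "nat \<Rightarrow> nat \<Rightarrow> bool"
  assumes Rw: "\<And>i j. R i j \<Longrightarrow> i < N \<and> j < N \<and> R j i"
begin

abbreviation "cls \<equiv> cl R ` {0..<N}"

lemma rt_sym: "R\<^sup>*\<^sup>* i j \<Longrightarrow> R\<^sup>*\<^sup>* j i"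
proof (induct rule: rtranclp_induct)
  case base then show ?case by simp
next
  case (step y z)
  then have "R z y" using Rw by blast
  then show ?case using step by (meson converse_rtranclp_into_rtranclp)
qed

lemma rt_range: "R\<^sup>*\<^sup>* i j \<Longrightarrow> i < N \<Longrightarrow> j < N"
  by (induct rule: rtranclp_induct) (use Rw in auto)

lemma cl_mem: "i \<in> cl R i" by (simp add: cl_def)

lemma cl_sub: "i < N \<Longrightarrow> cl R i \<subseteq> {0..<N}"
  using rt_range by (auto simp: cl_def)

lemma cl_same: "j \<in> cl R i \<Longrightarrow> cl R j = cl R i"
  unfolding cl_def using rt_sym by (auto intro: rtranclp_trans)

lemma in_cls_iff: "i < N \<Longrightarrow> C \<in> cls \<Longrightarrow> i \<in> C \<longleftrightarrow> C = cl R i"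
  using cl_same cl_mem by auto

lemma fin_cls: "finite cls" by simp

lemma num_comp: "num_components N R = card cls"
  unfolding num_components_def quot_eq ..

lemma vsum_eval:
  assumes J: "J \<subseteq> cls" and i: "i < N"
  shows "vsum J c i = (if cl R i \<in> J then c (cl R i) else 0)"
proof -
  have fJ: "finite J" using J finite_subset by blast
  have "vsum J c i = (\<Sum>C\<in>J. (if C = cl R i then c C else 0))"
    unfolding vsum_def using J i in_cls_iff by (intro sum.cong refl) auto
  also have "\<dots> = (if cl R i \<in> J then c (cl R i) else 0)"
    using fJ by (simp add: sum.delta')
  finally show ?thesis .
qed

lemma vsum_const: "J \<subseteq> cls \<Longrightarrow> R i j \<Longrightarrow> vsum J c i = vsum J c j"
proof -
  assume J: "J \<subseteq> cls" and r: "R i j"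
  then have ij: "i < N" "j < N" using Rw by auto
  have "cl R j = cl R i" using r by (intro cl_same) (auto simp: cl_def)
  then show ?thesis using vsum_eval[OF J ij(1)] vsum_eval[OF J ij(2)] by simp
qed

lemma vsum_indep:
  assumes J: "J \<subseteq> cls" and z: "\<forall>i<N. vsum J c i = 0"
  shows "\<forall>C\<in>J. c C = 0"
proof
  fix C assume C: "C \<in> J"
  then obtain i where i: "i < N" "C = cl R i" using J by auto
  show "c C = 0" using z i vsum_eval[OF J i(1), of c] C by simp
qed

lemma card_cls_minus: "N > 0 \<Longrightarrow> card (cls - {cl R 0}) = card cls - 1"
  by (simp add: card_Diff_singleton)

end

locale sgraph =
  fixes N :: nat and E \<sigma> :: "nat \<Rightarrow> nat \<Rightarrow> bool"
  assumes graph: "simple_graph N E"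
    and sym_sign: "\<forall>i j. E i j \<longrightarrow> \<sigma> i j = \<sigma> j i"
    and conn: "graph_connected N E"
begin

abbreviation "Ep \<equiv> (\<lambda>i j. E i j \<and> \<sigma> i j)"
abbreviation "Em \<equiv> (\<lambda>i j. E i j \<and> \<not> \<sigma> i j)"

lemma Ew: "E i j \<Longrightarrow> i < N \<and> j < N \<and> i \<noteq> j \<and> E j i"
  using graph unfolding simple_graph_def by blast

lemma N0: "N > 0" using conn unfolding graph_connected_def by blast

sublocale P: rel_in N Ep
proof
  fix i j assume "E i j \<and> \<sigma> i j"
  then show "i < N \<and> j < N \<and> E j i \<and> \<sigma> j i" using Ew[of i j] sym_sign by auto
qed
sublocale M: rel_in N Em
proof
  fix i j assume "E i j \<and> \<not> \<sigma> i j"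
  then show "i < N \<and> j < N \<and> E j i \<and> \<not> \<sigma> j i" using Ew[of i j] sym_sign by auto
qed

lemma conn_const:
  assumes h: "\<And>i j. E i j \<Longrightarrow> x i = (x j :: real)" and i: "i < N"
  shows "x i = x 0"
proof -
  have "E\<^sup>*\<^sup>* 0 i" using conn i N0 unfolding graph_connected_def by blast
  then have "x 0 = x i" using const_rtranclp[where E=E and x=x, OF h] by blast
  then show ?thesis by simp
qed

context
  fixes \<gamma> assumes adm: "\<gamma> \<in> admissible_weights E \<sigma>"
begin

lemma gsym: "\<forall>i j. \<gamma> i j = \<gamma> j i" using adm unfolding admissible_weights_def by blast
lemma gpos: "Ep i j \<Longrightarrow> \<gamma> i j > 0" using adm unfolding admissible_weights_def by blast
lemma gneg: "Em i j \<Longrightarrow> \<gamma> i j < 0" using adm unfolding admissible_weights_def by blast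
lemma goff: "\<not> E i j \<Longrightarrow> \<gamma> i j = 0" using adm unfolding admissible_weights_def by blast

abbreviation "L \<equiv> signed_laplacian N \<gamma>"

lemma Lc: "L \<in> carrier_mat N N" by (rule lap_carrier)
lemma Ls: "transpose_mat L = L" by (rule lap_sym[OF gsym])
lemma Lq: "qf N L x = - PP N \<gamma> x / 2" by (rule lap_qf[OF gsym])

lemma T1:
  assumes c: "\<And>i j. Ep i j \<Longrightarrow> x i = x j"
  shows "PP N \<gamma> x \<le> 0" "PP N \<gamma> x = 0 \<Longrightarrow> (\<forall>i j. Em i j \<longrightarrow> x i = x j)"
proof -
  have le: "\<And>i j. \<gamma> i j * (x i - x j)^2 \<le> 0"
  proof -
    fix i j
    show "\<gamma> i j * (x i - x j)^2 \<le> 0"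
    proof (cases "E i j")
      case True
      show ?thesis
      proof (cases "\<sigma> i j")
        case True then show ?thesis using c \<open>E i j\<close> by simp
      next
        case False then show ?thesis using gneg[of i j] \<open>E i j\<close> by (simp add: mult_nonpos_nonneg)
      qed
    next
      case False then show ?thesis using goff by simp
    qed
  qed
  have row: "\<And>i. (\<Sum>j<N. \<gamma> i j * (x i - x j)^2) \<le> 0" by (rule sum_nonpos) (use le in auto)
  show "PP N \<gamma> x \<le> 0" unfolding PP_def by (rule sum_nonpos) (use row in auto)
  assume z: "PP N \<gamma> x = 0"
  show "\<forall>i j. Em i j \<longrightarrow> x i = x j"
  proof (intro allI impI)
    fix i j assume e: "Em i j"
    then have ij: "i < N" "j < N" using Ew by auto
    have "(\<Sum>i<N. - (\<Sum>j<N. \<gamma> i j * (x i - x j)^2)) = 0" using z by (simp add: PP_def sum_negf)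
    then have "\<forall>i\<in>{..<N}. - (\<Sum>j<N. \<gamma> i j * (x i - x j)^2) = 0"
      using sum_nonneg_eq_0_iff[of "{..<N}" "\<lambda>i. - (\<Sum>j<N. \<gamma> i j * (x i - x j)^2)"] row by force
    then have "(\<Sum>j<N. - (\<gamma> i j * (x i - x j)^2)) = 0" using ij by (simp add: sum_negf)
    then have "\<forall>j\<in>{..<N}. - (\<gamma> i j * (x i - x j)^2) = 0"
      using sum_nonneg_eq_0_iff[of "{..<N}" "\<lambda>j. - (\<gamma> i j * (x i - x j)^2)"] le by force
    then have "\<gamma> i j * (x i - x j)^2 = 0" using ij by simp
    then show "x i = x j" using gneg[OF e] by simp
  qed
qed

lemma T2:
  assumes c: "\<And>i j. Em i j \<Longrightarrow> x i = x j"
  shows "PP N \<gamma> x \<ge> 0" "PP N \<gamma> x = 0 \<Longrightarrow> (\<forall>i j. Ep i j \<longrightarrow> x i = x j)"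
proof -
  have le: "\<And>i j. \<gamma> i j * (x i - x j)^2 \<ge> 0"
  proof -
    fix i j
    show "\<gamma> i j * (x i - x j)^2 \<ge> 0"
    proof (cases "E i j")
      case True
      show ?thesis
      proof (cases "\<sigma> i j")
        case False then show ?thesis using c \<open>E i j\<close> by simp
      next
        case True then show ?thesis using gpos[of i j] \<open>E i j\<close> by simp
      qed
    next
      case False then show ?thesis using goff by simp
    qed
  qed
  have row: "\<And>i. (\<Sum>j<N. \<gamma> i j * (x i - x j)^2) \<ge> 0" by (rule sum_nonneg) (use le in auto)
  show "PP N \<gamma> x \<ge> 0" unfolding PP_def by (rule sum_nonneg) (use row in auto)
  assume z: "PP N \<gamma> x = 0"
  show "\<forall>i j. Ep i j \<longrightarrow> x i = x j"
  proof (intro allI impI)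
    fix i j assume e: "Ep i j"
    then have ij: "i < N" "j < N" using Ew by auto
    have "\<forall>i\<in>{..<N}. (\<Sum>j<N. \<gamma> i j * (x i - x j)^2) = 0"
      using z sum_nonneg_eq_0_iff[of "{..<N}" "\<lambda>i. (\<Sum>j<N. \<gamma> i j * (x i - x j)^2)"] row
      unfolding PP_def by force
    then have "\<forall>j\<in>{..<N}. \<gamma> i j * (x i - x j)^2 = 0"
      using sum_nonneg_eq_0_iff[of "{..<N}" "\<lambda>j. \<gamma> i j * (x i - x j)^2"] le ij by force
    then have "\<gamma> i j * (x i - x j)^2 = 0" using ij by simp
    then show "x i = x j" using gpos[OF e] by simp
  qed
qed

lemma B1: "num_components N Ep - 1 \<le> n_pos L"
proof -
  let ?J = "P.cls - {cl Ep 0}"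
  have J: "?J \<subseteq> P.cls" by blast
  have "card ?J \<le> n_pos L"
  proof (rule sym_LB_pos[OF Lc Ls, where v = "\<lambda>C i. if i \<in> C then 1 else 0"])
    show "finite ?J" by simp
    fix c :: "nat set \<Rightarrow> real" assume c: "\<exists>C\<in>?J. c C \<noteq> 0"
    have cst: "\<And>i j. Ep i j \<Longrightarrow> vsum ?J c i = vsum ?J c j" by (rule P.vsum_const[OF J])
    have "qf N L (vsum ?J c) > 0"
    proof (rule ccontr)
      assume "\<not> ?thesis"
      then have "PP N \<gamma> (vsum ?J c) = 0" using T1(1)[where x="vsum ?J c", OF cst] Lq by simp
      then have cm: "\<forall>i j. Em i j \<longrightarrow> vsum ?J c i = vsum ?J c j" using T1(2)[where x="vsum ?J c", OF cst] by blast
      have ce: "\<And>i j. E i j \<Longrightarrow> vsum ?J c i = vsum ?J c j" using cst cm by blast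
      have z0: "vsum ?J c 0 = 0" using P.vsum_eval[OF J N0] by simp
      have "\<forall>i<N. vsum ?J c i = 0" using conn_const[where x="vsum ?J c", OF ce] z0 by simp
      then have "\<forall>C\<in>?J. c C = 0" by (rule P.vsum_indep[OF J])
      with c show False by blast
    qed
    then show "qf N L (\<lambda>i. \<Sum>C\<in>?J. c C * (if i \<in> C then 1 else 0)) > 0" unfolding vsum_def .
  qed
  then show ?thesis using P.card_cls_minus[OF N0] P.num_comp by simp
qed

lemma B3: "num_components N Em - 1 \<le> n_neg L"
proof -
  let ?J = "M.cls - {cl Em 0}"
  have J: "?J \<subseteq> M.cls" by blast
  have "card ?J \<le> n_neg L"
  proof (rule sym_LB_neg[OF Lc Ls, where v = "\<lambda>C i. if i \<in> C then 1 else 0"])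
    show "finite ?J" by simp
    fix c :: "nat set \<Rightarrow> real" assume c: "\<exists>C\<in>?J. c C \<noteq> 0"
    have cst: "\<And>i j. Em i j \<Longrightarrow> vsum ?J c i = vsum ?J c j" by (rule M.vsum_const[OF J])
    have "qf N L (vsum ?J c) < 0"
    proof (rule ccontr)
      assume "\<not> ?thesis"
      then have "PP N \<gamma> (vsum ?J c) = 0" using T2(1)[where x="vsum ?J c", OF cst] Lq by simp
      then have cm: "\<forall>i j. Ep i j \<longrightarrow> vsum ?J c i = vsum ?J c j" using T2(2)[where x="vsum ?J c", OF cst] by blast
      have ce: "\<And>i j. E i j \<Longrightarrow> vsum ?J c i = vsum ?J c j" using cst cm by blast
      have z0: "vsum ?J c 0 = 0" using M.vsum_eval[OF J N0] by simp
      have "\<forall>i<N. vsum ?J c i = 0" using conn_const[where x="vsum ?J c", OF ce] z0 by simp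
      then have "\<forall>C\<in>?J. c C = 0" by (rule M.vsum_indep[OF J])
      with c show False by blast
    qed
    then show "qf N L (\<lambda>i. \<Sum>C\<in>?J. c C * (if i \<in> C then 1 else 0)) < 0" unfolding vsum_def .
  qed
  then show ?thesis using M.card_cls_minus[OF N0] M.num_comp by simp
qed

lemma B4: "num_components N Ep + n_neg L \<le> N"
proof -
  have "card P.cls + n_neg L \<le> N"
  proof (rule sym_UB_neg[OF Lc Ls, where v = "\<lambda>C i. if i \<in> C then 1 else 0"])
    show "finite P.cls" by simp
    fix c :: "nat set \<Rightarrow> real"
    show "(\<forall>i<N. (\<Sum>C\<in>P.cls. c C * (if i \<in> C then 1 else 0)) = 0) \<Longrightarrow> (\<forall>C\<in>P.cls. c C = 0)"
      using P.vsum_indep[of P.cls c] unfolding vsum_def by blast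
    have cst: "\<And>i j. Ep i j \<Longrightarrow> vsum P.cls c i = vsum P.cls c j" by (rule P.vsum_const) simp
    show "qf N L (\<lambda>i. \<Sum>C\<in>P.cls. c C * (if i \<in> C then 1 else 0)) \<ge> 0"
      using T1(1)[where x="vsum P.cls c", OF cst] Lq unfolding vsum_def by simp
  qed
  then show ?thesis using P.num_comp by simp
qed

lemma B2: "num_components N Em + n_pos L \<le> N"
proof -
  have "card M.cls + n_pos L \<le> N"
  proof (rule sym_UB_pos[OF Lc Ls, where v = "\<lambda>C i. if i \<in> C then 1 else 0"])
    show "finite M.cls" by simp
    fix c :: "nat set \<Rightarrow> real"
    show "(\<forall>i<N. (\<Sum>C\<in>M.cls. c C * (if i \<in> C then 1 else 0)) = 0) \<Longrightarrow> (\<forall>C\<in>M.cls. c C = 0)"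
      using M.vsum_indep[of M.cls c] unfolding vsum_def by blast
    have cst: "\<And>i j. Em i j \<Longrightarrow> vsum M.cls c i = vsum M.cls c j" by (rule M.vsum_const) simp
    show "qf N L (\<lambda>i. \<Sum>C\<in>M.cls. c C * (if i \<in> C then 1 else 0)) \<le> 0"
      using T2(1)[where x="vsum M.cls c", OF cst] Lq unfolding vsum_def by simp
  qed
  then show ?thesis using M.num_comp by simp
qed

lemma B5: "n_zero L \<ge> 1" by (rule lap_ones[OF N0])

lemma B6: "n_pos L + n_neg L + n_zero L = N" by (rule sym_sum[OF Lc Ls])

lemma Bcp: "num_components N Ep \<ge> 1" "num_components N Em \<ge> 1"
  using P.num_comp M.num_comp N0 by (auto simp: card_gt_0_iff Suc_le_eq)

end

end

lemma sum_if_T: "T \<subseteq> {..<(n::nat)} \<Longrightarrow> (\<Sum>k<n. (if k \<in> T then g k else 0)) = (\<Sum>k\<in>T. (g k :: real))"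
proof -
  assume T: "T \<subseteq> {..<n}"
  have "(\<Sum>k<n. (if k \<in> T then g k else 0)) = sum g {k \<in> {..<n}. k \<in> T}"
    using sum.inter_filter[of "{..<n}" g "\<lambda>k. k \<in> T"] by simp
  also have "{k \<in> {..<n}. k \<in> T} = T" using T by auto
  finally show ?thesis .
qed

context diagd begin

lemma witness_vals:
  fixes c :: "nat \<Rightarrow> real"
  assumes T: "T \<subseteq> {..<n}"
  defines "x \<equiv> (\<lambda>i. \<Sum>l\<in>T. c l * Q $$ (i,l))"
  shows "qf n A x = (\<Sum>k\<in>T. f k * (c k)^2)" "nrm n x = (\<Sum>k\<in>T. (c k)^2)"
proof -
  have y: "\<And>k. k < n \<Longrightarrow> yc n Q x k = (if k \<in> T then c k else 0)" unfolding x_def by (rule EIG[OF T])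
  have "qf n A x = (\<Sum>k<n. (if k \<in> T then f k * (c k)^2 else 0))"
    unfolding F1 by (intro sum.cong refl) (simp add: y)
  then show "qf n A x = (\<Sum>k\<in>T. f k * (c k)^2)" using sum_if_T[OF T] by simp
  have "nrm n x = (\<Sum>k<n. (if k \<in> T then (c k)^2 else 0))"
    unfolding Fnorm by (intro sum.cong refl) (simp add: y)
  then show "nrm n x = (\<Sum>k\<in>T. (c k)^2)" using sum_if_T[OF T] by simp
qed

end

lemma pos_sumsq:
  assumes "finite T" "j \<in> T" "c j \<noteq> (0::real)"
  shows "(\<Sum>k\<in>T. (c k)^2) > 0"
proof -
  have "(c j)^2 \<le> (\<Sum>k\<in>T. (c k)^2)" by (rule member_le_sum) (use assms in auto)
  moreover have "(c j)^2 > 0" using assms by simp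
  ultimately show ?thesis by linarith
qed

lemma pert_neg:
  assumes A: "A \<in> carrier_mat n n" and s: "transpose_mat A = A"
  shows "\<exists>m>0. \<forall>B \<delta>. B \<in> carrier_mat n n \<longrightarrow> transpose_mat B = B \<longrightarrow> \<delta> < m \<longrightarrow>
     (\<forall>x. qf n B x \<le> qf n A x + \<delta> * nrm n x) \<longrightarrow> n_neg A \<le> n_neg B"
proof -
  obtain Q f where d: "diagd n A Q f" using sym_diagd[OF A s] by blast
  interpret diagd n A Q f by fact
  define T where "T = {k. k < n \<and> f k < 0}"
  have T: "T \<subseteq> {..<n}" "finite T" by (auto simp: T_def)
  show ?thesis
  proof (cases "T = {}")
    case True
    then have "n_neg A = 0" unfolding counts T_def[symmetric] by simp
    then show ?thesis by (intro exI[of _ 1]) auto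
  next
    case False
    define m where "m = Min ((\<lambda>k. - f k) ` T)"
    have mpos: "m > 0" unfolding m_def using T False by (auto simp: T_def)
    have mle: "\<And>k. k \<in> T \<Longrightarrow> m \<le> - f k" unfolding m_def using T by auto
    show ?thesis
    proof (intro exI[of _ m] conjI mpos allI impI)
      fix B :: "real mat" and \<delta> :: real
      assume B: "B \<in> carrier_mat n n" and sB: "transpose_mat B = B" and dm: "\<delta> < m"
        and hyp: "\<forall>x. qf n B x \<le> qf n A x + \<delta> * nrm n x"
      have "card T \<le> n_neg B"
      proof (rule sym_LB_neg[OF B sB T(2), where v = "\<lambda>l i. Q $$ (i,l)"])
        fix c :: "nat \<Rightarrow> real" assume c: "\<exists>j\<in>T. c j \<noteq> 0"
        let ?x = "\<lambda>i. \<Sum>l\<in>T. c l * Q $$ (i,l)"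
        have s: "(\<Sum>k\<in>T. (c k)^2) > 0" using c pos_sumsq[OF T(2)] by blast
        have "qf n A ?x = (\<Sum>k\<in>T. f k * (c k)^2)" by (rule witness_vals(1)[OF T(1)])
        also have "\<dots> \<le> (\<Sum>k\<in>T. - m * (c k)^2)"
        proof (rule sum_mono)
          fix k assume "k \<in> T"
          then have "f k \<le> - m" using mle by force
          then show "f k * (c k)^2 \<le> - m * (c k)^2" by (rule mult_right_mono) simp
        qed
        finally have qa: "qf n A ?x \<le> - m * (\<Sum>k\<in>T. (c k)^2)" by (simp add: sum_distrib_left)
        have "qf n B ?x \<le> qf n A ?x + \<delta> * (\<Sum>k\<in>T. (c k)^2)"
        proof -
          have "qf n B ?x \<le> qf n A ?x + \<delta> * nrm n ?x" using hyp by blast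
          then show ?thesis using witness_vals(2)[OF T(1), of c] by simp
        qed
        also have "\<dots> \<le> (\<delta> - m) * (\<Sum>k\<in>T. (c k)^2)" using qa by (simp add: algebra_simps)
        also have "\<dots> < 0" using s dm by (simp add: mult_neg_pos)
        finally show "qf n B ?x < 0" .
      qed
      then show "n_neg A \<le> n_neg B" unfolding counts T_def by simp
    qed
  qed
qed

lemma pert_pos:
  assumes A: "A \<in> carrier_mat n n" and s: "transpose_mat A = A"
  shows "\<exists>m>0. \<forall>B \<delta>. B \<in> carrier_mat n n \<longrightarrow> transpose_mat B = B \<longrightarrow> \<delta> < m \<longrightarrow>
     (\<forall>x. qf n A x - \<delta> * nrm n x \<le> qf n B x) \<longrightarrow> n_pos A \<le> n_pos B"
proof -
  obtain Q f where d: "diagd n A Q f" using sym_diagd[OF A s] by blast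
  interpret diagd n A Q f by fact
  define T where "T = {k. k < n \<and> f k > 0}"
  have T: "T \<subseteq> {..<n}" "finite T" by (auto simp: T_def)
  show ?thesis
  proof (cases "T = {}")
    case True
    then have "n_pos A = 0" unfolding counts T_def[symmetric] by simp
    then show ?thesis by (intro exI[of _ 1]) auto
  next
    case False
    define m where "m = Min (f ` T)"
    have mpos: "m > 0" unfolding m_def using T False by (auto simp: T_def)
    have mle: "\<And>k. k \<in> T \<Longrightarrow> m \<le> f k" unfolding m_def using T by auto
    show ?thesis
    proof (intro exI[of _ m] conjI mpos allI impI)
      fix B :: "real mat" and \<delta> :: real
      assume B: "B \<in> carrier_mat n n" and sB: "transpose_mat B = B" and dm: "\<delta> < m"
        and hyp: "\<forall>x. qf n A x - \<delta> * nrm n x \<le> qf n B x"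
      have "card T \<le> n_pos B"
      proof (rule sym_LB_pos[OF B sB T(2), where v = "\<lambda>l i. Q $$ (i,l)"])
        fix c :: "nat \<Rightarrow> real" assume c: "\<exists>j\<in>T. c j \<noteq> 0"
        let ?x = "\<lambda>i. \<Sum>l\<in>T. c l * Q $$ (i,l)"
        have s: "(\<Sum>k\<in>T. (c k)^2) > 0" using c pos_sumsq[OF T(2)] by blast
        have "m * (\<Sum>k\<in>T. (c k)^2) = (\<Sum>k\<in>T. m * (c k)^2)" by (simp add: sum_distrib_left)
        also have "\<dots> \<le> (\<Sum>k\<in>T. f k * (c k)^2)"
        proof (rule sum_mono)
          fix k assume "k \<in> T"
          then have "m \<le> f k" using mle by force
          then show "m * (c k)^2 \<le> f k * (c k)^2" by (rule mult_right_mono) simp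
        qed
        also have "\<dots> = qf n A ?x" by (rule witness_vals(1)[OF T(1), symmetric])
        finally have qa: "m * (\<Sum>k\<in>T. (c k)^2) \<le> qf n A ?x" .
        have "0 < (m - \<delta>) * (\<Sum>k\<in>T. (c k)^2)" using s dm by simp
        also have "\<dots> \<le> qf n A ?x - \<delta> * (\<Sum>k\<in>T. (c k)^2)" using qa by (simp add: algebra_simps)
        also have "\<dots> \<le> qf n B ?x"
        proof -
          have "qf n A ?x - \<delta> * nrm n ?x \<le> qf n B ?x" using hyp by blast
          then show ?thesis using witness_vals(2)[OF T(1), of c] by simp
        qed
        finally show "qf n B ?x > 0" .
      qed
      then show "n_pos A \<le> n_pos B" unfolding counts T_def by simp
    qed
  qed
qed

lemma sqdiff_bound: "(\<Sum>i<N. \<Sum>j<N. (x i - x j)^2) \<le> 4 * real N * nrm N x"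
proof -
  have "(\<Sum>i<N. \<Sum>j<N. (x i - x j)^2) \<le> (\<Sum>i<N. \<Sum>j<N. 2 * (x i)^2 + 2 * (x j)^2)"
  proof (intro sum_mono)
    fix i j
    have "0 \<le> (x i + x j)^2" by simp
    then show "(x i - x j)^2 \<le> 2 * (x i)^2 + 2 * (x j)^2" by (simp add: power2_eq_square algebra_simps)
  qed
  also have "\<dots> = 4 * real N * nrm N x"
    by (simp add: sum.distrib nrm_def sum_distrib_left[symmetric] sum.swap[of "\<lambda>i j. (x j)^2"])
  finally show ?thesis .
qed

lemma PP_nonneg:
  assumes g: "\<And>i j. g i j \<ge> 0"
  shows "PP N g x \<ge> 0" "PP N g x = 0 \<Longrightarrow> i < N \<Longrightarrow> j < N \<Longrightarrow> g i j > 0 \<Longrightarrow> x i = x j"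
proof -
  have le: "\<And>i j. g i j * (x i - x j)^2 \<ge> 0" using g by simp
  have row: "\<And>i. (\<Sum>j<N. g i j * (x i - x j)^2) \<ge> 0" by (rule sum_nonneg) (use le in auto)
  show "PP N g x \<ge> 0" unfolding PP_def by (rule sum_nonneg) (use row in auto)
  assume z: "PP N g x = 0" and ij: "i < N" "j < N" and gp: "g i j > 0"
  have "\<forall>i\<in>{..<N}. (\<Sum>j<N. g i j * (x i - x j)^2) = 0"
    using z sum_nonneg_eq_0_iff[of "{..<N}" "\<lambda>i. (\<Sum>j<N. g i j * (x i - x j)^2)"] row
    unfolding PP_def by force
  then have "\<forall>j\<in>{..<N}. g i j * (x i - x j)^2 = 0"
    using sum_nonneg_eq_0_iff[of "{..<N}" "\<lambda>j. g i j * (x i - x j)^2"] le ij by force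
  then have "g i j * (x i - x j)^2 = 0" using ij by simp
  then show "x i = x j" using gp by simp
qed

lemma PP_neg: "PP N (\<lambda>i j. - g i j) x = - PP N g x"
  unfolding PP_def by (simp add: sum_negf)

lemma PP_split: "PP N (\<lambda>i j. if R i j then t else h i j) x =
   t * PP N (\<lambda>i j. if R i j then 1 else 0) x + PP N (\<lambda>i j. if R i j then 0 else h i j) x"
  unfolding PP_def sum_distrib_left sum.distrib[symmetric]
  by (intro sum.cong refl) (simp add: sum_distrib_left)

lemma PP_lower:
  assumes g: "\<And>i j. \<bar>g i j\<bar> \<le> 1"
  shows "PP N g x \<ge> - 4 * real N * nrm N x"
proof -
  have "- (\<Sum>i<N. \<Sum>j<N. (x i - x j)^2) \<le> PP N g x"
    unfolding PP_def sum_negf[symmetric]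
  proof (intro sum_mono)
    fix i j
    have "- 1 \<le> g i j" using g[of i j] by simp
    then show "-((x i - x j)^2) \<le> g i j * (x i - x j)^2"
      using mult_right_mono[of "-1" "g i j" "(x i - x j)^2"] by simp
  qed
  then show ?thesis using sqdiff_bound[where N=N and x=x] by linarith
qed

lemma PP_diff:
  assumes e: "\<And>i j. \<bar>g' i j - g i j\<bar> \<le> \<epsilon>"
  shows "\<bar>PP N g' x - PP N g x\<bar> \<le> \<epsilon> * (4 * real N * nrm N x)"
proof -
  have "PP N g' x - PP N g x = (\<Sum>i<N. \<Sum>j<N. (g' i j - g i j) * (x i - x j)^2)"
    unfolding PP_def by (simp add: sum_subtractf[symmetric] left_diff_distrib)
  also have "\<bar>\<dots>\<bar> \<le> (\<Sum>i<N. \<Sum>j<N. \<epsilon> * (x i - x j)^2)"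
  proof -
    have "\<bar>(\<Sum>i<N. \<Sum>j<N. (g' i j - g i j) * (x i - x j)^2)\<bar> \<le> (\<Sum>i<N. \<Sum>j<N. \<bar>(g' i j - g i j) * (x i - x j)^2\<bar>)"
      by (rule order_trans[OF sum_abs]) (intro sum_mono sum_abs)
    also have "\<dots> \<le> (\<Sum>i<N. \<Sum>j<N. \<epsilon> * (x i - x j)^2)"
      by (intro sum_mono) (use e in \<open>auto simp: abs_mult intro: mult_right_mono\<close>)
    finally show ?thesis .
  qed
  also have "\<dots> = \<epsilon> * (\<Sum>i<N. \<Sum>j<N. (x i - x j)^2)" by (simp add: sum_distrib_left)
  also have "\<dots> \<le> \<epsilon> * (4 * real N * nrm N x)"
  proof -
    have "\<epsilon> \<ge> 0" using e[of 0 0] by simp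
    then show ?thesis using sqdiff_bound[where N=N and x=x] by (simp add: mult_left_mono)
  qed
  finally show ?thesis .
qed

lemma nrm_nonneg: "nrm N x \<ge> 0" unfolding nrm_def by (rule sum_nonneg) simp

context rel_in begin

lemma big_weight:
  assumes hs: "\<And>i j. h i j = h j i" and hb: "\<And>i j. \<bar>h i j\<bar> \<le> 1"
  shows "\<exists>t>0. \<exists>J::nat set. \<exists>v. finite J \<and> N - card cls \<le> card J \<and>
    (\<forall>c. (\<exists>j\<in>J. c j \<noteq> 0) \<longrightarrow> PP N (\<lambda>i j. if R i j then t else h i j) (\<lambda>i. \<Sum>l\<in>J. c l * v l i) > 0)"
proof -
  define g1 where "g1 = (\<lambda>i j. if R i j then 1 else (0::real))"
  have g1s: "\<forall>i j. - g1 i j = - g1 j i" using Rw unfolding g1_def by auto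
  define M where "M = signed_laplacian N (\<lambda>i j. - g1 i j)"
  have Mc: "M \<in> carrier_mat N N" unfolding M_def by (rule lap_carrier)
  have Ms: "transpose_mat M = M" unfolding M_def by (rule lap_sym[OF g1s])
  have Mq: "\<And>x. qf N M x = PP N g1 x / 2" unfolding M_def lap_qf[OF g1s] PP_neg by simp
  have g1nn: "\<And>i j. g1 i j \<ge> 0" by (simp add: g1_def)
  obtain Q g where d: "diagd N M Q g" using sym_diagd[OF Mc Ms] by blast
  interpret D: diagd N M Q g by fact
  have gnn: "\<And>k. k < N \<Longrightarrow> g k \<ge> 0"
  proof -
    fix k assume k: "k < N"
    have "qf N M (\<lambda>i. \<Sum>l\<in>{k}. (\<lambda>_. 1) l * Q $$ (i,l)) = (\<Sum>l\<in>{k}. g l * ((\<lambda>_. 1::real) l)^2)"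
      by (rule D.witness_vals(1)) (use k in auto)
    then have "g k = qf N M (\<lambda>i. \<Sum>l\<in>{k}. (\<lambda>_. 1) l * Q $$ (i,l))" by simp
    also have "\<dots> \<ge> 0" unfolding Mq using PP_nonneg(1)[OF g1nn] by simp
    finally show "g k \<ge> 0" .
  qed
  define Z where "Z = {k. k < N \<and> g k = 0}"
  define Pos where "Pos = {k. k < N \<and> g k > 0}"
  have Z: "Z \<subseteq> {..<N}" "finite Z" by (auto simp: Z_def)
  have PosS: "Pos \<subseteq> {..<N}" "finite Pos" by (auto simp: Pos_def)
  have cardZ: "card Z \<le> card cls"
  proof (rule ccontr)
    assume "\<not> ?thesis"
    then have lt: "card cls < card Z" by simp
    define rep where "rep = (\<lambda>C::nat set. SOME i. i \<in> C)"
    obtain c where c: "\<exists>j\<in>Z. c j \<noteq> 0" and cz: "\<forall>C\<in>cls. (\<Sum>l\<in>Z. c l * Q $$ (rep C, l)) = 0"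
      using ker_gen[OF Z(2) _ lt, of "\<lambda>l C. Q $$ (rep C, l)"] by auto
    define x where "x = (\<lambda>i. \<Sum>l\<in>Z. c l * Q $$ (i,l))"
    have "qf N M x = (\<Sum>k\<in>Z. g k * (c k)^2)" unfolding x_def by (rule D.witness_vals(1)[OF Z(1)])
    also have "\<dots> = 0" by (simp add: Z_def)
    finally have "PP N g1 x = 0" using Mq by simp
    then have ce: "\<And>i j. R i j \<Longrightarrow> x i = x j"
      using PP_nonneg(2)[OF g1nn] Rw by (auto simp: g1_def)
    have "\<forall>i<N. x i = 0"
    proof (intro allI impI)
      fix i assume i: "i < N"
      let ?C = "cl R i"
      have C: "?C \<in> cls" using i by auto
      have "rep ?C \<in> ?C" unfolding rep_def using cl_mem by (rule someI)
      then have "R\<^sup>*\<^sup>* i (rep ?C)" by (simp add: cl_def)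
      then have "x i = x (rep ?C)" using const_rtranclp[where E=R and x=x, OF ce] by blast
      also have "\<dots> = 0" using cz C unfolding x_def by blast
      finally show "x i = 0" .
    qed
    then have "nrm N x = 0" by (simp add: nrm_def)
    moreover have "nrm N x = (\<Sum>k\<in>Z. (c k)^2)" unfolding x_def by (rule D.witness_vals(2)[OF Z(1)])
    moreover have "(\<Sum>k\<in>Z. (c k)^2) > 0" using c pos_sumsq[OF Z(2)] by blast
    ultimately show False by simp
  qed
  have "card Pos + card {k. k < N \<and> \<not> g k > 0} = N" unfolding Pos_def by (rule card_split)
  moreover have "{k. k < N \<and> \<not> g k > 0} = Z" using gnn by (force simp: Z_def)
  ultimately have cardPos: "N - card cls \<le> card Pos" using cardZ by simp
  show ?thesis
  proof (cases "Pos = {}")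
    case True
    then show ?thesis using cardPos by (intro exI[of _ 1] conjI exI[of _ "{}"]) auto
  next
    case False
    define \<mu> where "\<mu> = Min (g ` Pos)"
    have mpos: "\<mu> > 0" unfolding \<mu>_def using PosS False by (auto simp: Pos_def)
    have mle: "\<And>k. k \<in> Pos \<Longrightarrow> \<mu> \<le> g k" unfolding \<mu>_def using PosS by auto
    define t where "t = (2 * real N + 1) / \<mu>"
    have tpos: "t > 0" using mpos by (simp add: t_def)
    have tmu: "t * \<mu> = 2 * real N + 1" using mpos by (simp add: t_def)
    show ?thesis
    proof (intro exI[of _ t] conjI tpos exI[of _ Pos] exI[of _ "\<lambda>l i. Q $$ (i,l)"] PosS(2) cardPos allI impI)
      fix c :: "nat \<Rightarrow> real" assume c: "\<exists>j\<in>Pos. c j \<noteq> 0"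
      let ?x = "\<lambda>i. \<Sum>l\<in>Pos. c l * Q $$ (i,l)"
      define s where "s = (\<Sum>k\<in>Pos. (c k)^2)"
      have s: "s > 0" unfolding s_def using c pos_sumsq[OF PosS(2)] by blast
      have ns: "nrm N ?x = s" unfolding s_def by (rule D.witness_vals(2)[OF PosS(1)])
      have "\<mu> * s = (\<Sum>k\<in>Pos. \<mu> * (c k)^2)" by (simp add: s_def sum_distrib_left)
      also have "\<dots> \<le> (\<Sum>k\<in>Pos. g k * (c k)^2)"
      proof (rule sum_mono)
        fix k assume "k \<in> Pos"
        then have "\<mu> \<le> g k" using mle by force
        then show "\<mu> * (c k)^2 \<le> g k * (c k)^2" by (rule mult_right_mono) simp
      qed
      also have "\<dots> = qf N M ?x" by (rule D.witness_vals(1)[OF PosS(1), symmetric])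
      finally have "\<mu> * s \<le> PP N g1 ?x / 2" using Mq by simp
      then have "2 * \<mu> * s \<le> PP N g1 ?x" by simp
      then have "t * (2 * \<mu> * s) \<le> t * PP N g1 ?x" using tpos by (intro mult_left_mono) auto
      then have p1: "2 * (t * \<mu>) * s \<le> t * PP N g1 ?x" by (simp add: mult_ac)
      have p2: "PP N (\<lambda>i j. if R i j then 0 else h i j) ?x \<ge> - 4 * real N * s"
        using PP_lower[of "\<lambda>i j. if R i j then 0 else h i j" N ?x] hb ns by simp
      have "PP N (\<lambda>i j. if R i j then t else h i j) ?x = t * PP N g1 ?x + PP N (\<lambda>i j. if R i j then 0 else h i j) ?x"
        unfolding g1_def by (rule PP_split)
      also have "\<dots> \<ge> 2 * (t * \<mu>) * s - 4 * real N * s" using p1 p2 by linarith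
      finally have "PP N (\<lambda>i j. if R i j then t else h i j) ?x \<ge> 2 * s" unfolding tmu by (simp add: algebra_simps)
      then show "PP N (\<lambda>i j. if R i j then t else h i j) ?x > 0" using s by linarith
    qed
  qed
qed

end

context sgraph begin

lemma pert_lap:
  assumes a: "\<gamma> \<in> admissible_weights E \<sigma>" and a': "\<gamma>' \<in> admissible_weights E \<sigma>"
    and e: "\<epsilon> > 0" and cl: "\<forall>i j. E i j \<longrightarrow> \<bar>\<gamma>' i j - \<gamma> i j\<bar> < \<epsilon>"
  shows "\<bar>qf N (signed_laplacian N \<gamma>') x - qf N (signed_laplacian N \<gamma>) x\<bar> \<le> (2 * real N * \<epsilon>) * nrm N x"
proof -
  have b: "\<And>i j. \<bar>\<gamma>' i j - \<gamma> i j\<bar> \<le> \<epsilon>"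
  proof -
    fix i j show "\<bar>\<gamma>' i j - \<gamma> i j\<bar> \<le> \<epsilon>"
    proof (cases "E i j")
      case True then show ?thesis using cl by (simp add: less_imp_le)
    next
      case False then show ?thesis using goff[OF a] goff[OF a'] e by simp
    qed
  qed
  have "qf N (signed_laplacian N \<gamma>') x - qf N (signed_laplacian N \<gamma>) x = - (PP N \<gamma>' x - PP N \<gamma> x) / 2"
    using Lq[OF a] Lq[OF a'] by simp
  then have "\<bar>qf N (signed_laplacian N \<gamma>') x - qf N (signed_laplacian N \<gamma>) x\<bar> = \<bar>- (PP N \<gamma>' x - PP N \<gamma> x) / 2\<bar>"
    by (simp only:)
  also have "\<dots> = \<bar>PP N \<gamma>' x - PP N \<gamma> x\<bar> / 2" by simp
  also have "\<dots> \<le> \<epsilon> * (4 * real N * nrm N x) / 2" using PP_diff[where g'="\<gamma>'" and g="\<gamma>" and N=N and x=x, OF b] by simp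
  finally show ?thesis by (simp add: algebra_simps)
qed

definition "U1 = {\<gamma> \<in> admissible_weights E \<sigma>. N - num_components N Ep \<le> n_neg (signed_laplacian N \<gamma>)}"
definition "U2 = {\<gamma> \<in> admissible_weights E \<sigma>. N - num_components N Em \<le> n_pos (signed_laplacian N \<gamma>)}"

lemma eps_choice: "m > 0 \<Longrightarrow> 2 * real N * (m / (4 * real N + 1)) < (m::real)"
proof -
  assume m: "m > 0"
  have "2 * real N * (m / (4 * real N + 1)) = m * (2 * real N / (4 * real N + 1))" by simp
  also have "\<dots> < m * 1" using m by (intro mult_strict_left_mono) auto
  finally show ?thesis by simp
qed

lemma open1: "weights_open E \<sigma> U1"
  unfolding weights_open_def
proof (intro conjI ballI)
  show "U1 \<subseteq> admissible_weights E \<sigma>" unfolding U1_def by blast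
  fix \<gamma> assume g: "\<gamma> \<in> U1"
  then have a: "\<gamma> \<in> admissible_weights E \<sigma>" unfolding U1_def by blast
  obtain m where m: "m > 0" and mp: "\<forall>B \<delta>. B \<in> carrier_mat N N \<longrightarrow> transpose_mat B = B \<longrightarrow> \<delta> < m \<longrightarrow>
     (\<forall>x. qf N B x \<le> qf N (signed_laplacian N \<gamma>) x + \<delta> * nrm N x) \<longrightarrow> n_neg (signed_laplacian N \<gamma>) \<le> n_neg B"
    using pert_neg[OF Lc[OF a] Ls[OF a]] by blast
  define \<epsilon> where "\<epsilon> = m / (4 * real N + 1)"
  have e: "\<epsilon> > 0" using m by (simp add: \<epsilon>_def add_pos_nonneg)
  show "\<exists>\<epsilon>>0. \<forall>\<gamma>'\<in>admissible_weights E \<sigma>. (\<forall>i j. E i j \<longrightarrow> \<bar>\<gamma>' i j - \<gamma> i j\<bar> < \<epsilon>) \<longrightarrow> \<gamma>' \<in> U1"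
  proof (intro exI[of _ \<epsilon>] conjI e ballI impI)
    fix \<gamma>' assume a': "\<gamma>' \<in> admissible_weights E \<sigma>" and cl: "\<forall>i j. E i j \<longrightarrow> \<bar>\<gamma>' i j - \<gamma> i j\<bar> < \<epsilon>"
    have "\<forall>x. qf N (signed_laplacian N \<gamma>') x \<le> qf N (signed_laplacian N \<gamma>) x + (2 * real N * \<epsilon>) * nrm N x"
    proof
      fix x
      have "\<bar>qf N (signed_laplacian N \<gamma>') x - qf N (signed_laplacian N \<gamma>) x\<bar> \<le> (2 * real N * \<epsilon>) * nrm N x"
        by (rule pert_lap[OF a a' e cl])
      then show "qf N (signed_laplacian N \<gamma>') x \<le> qf N (signed_laplacian N \<gamma>) x + (2 * real N * \<epsilon>) * nrm N x"
        unfolding abs_le_iff by linarith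
    qed
    moreover have "2 * real N * \<epsilon> < m" unfolding \<epsilon>_def by (rule eps_choice[OF m])
    ultimately have "n_neg (signed_laplacian N \<gamma>) \<le> n_neg (signed_laplacian N \<gamma>')"
      using mp[rule_format, OF Lc[OF a'] Ls[OF a']] by blast
    then show "\<gamma>' \<in> U1" using g a' unfolding U1_def by auto
  qed
qed

lemma open2: "weights_open E \<sigma> U2"
  unfolding weights_open_def
proof (intro conjI ballI)
  show "U2 \<subseteq> admissible_weights E \<sigma>" unfolding U2_def by blast
  fix \<gamma> assume g: "\<gamma> \<in> U2"
  then have a: "\<gamma> \<in> admissible_weights E \<sigma>" unfolding U2_def by blast
  obtain m where m: "m > 0" and mp: "\<forall>B \<delta>. B \<in> carrier_mat N N \<longrightarrow> transpose_mat B = B \<longrightarrow> \<delta> < m \<longrightarrow>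
     (\<forall>x. qf N (signed_laplacian N \<gamma>) x - \<delta> * nrm N x \<le> qf N B x) \<longrightarrow> n_pos (signed_laplacian N \<gamma>) \<le> n_pos B"
    using pert_pos[OF Lc[OF a] Ls[OF a]] by blast
  define \<epsilon> where "\<epsilon> = m / (4 * real N + 1)"
  have e: "\<epsilon> > 0" using m by (simp add: \<epsilon>_def add_pos_nonneg)
  show "\<exists>\<epsilon>>0. \<forall>\<gamma>'\<in>admissible_weights E \<sigma>. (\<forall>i j. E i j \<longrightarrow> \<bar>\<gamma>' i j - \<gamma> i j\<bar> < \<epsilon>) \<longrightarrow> \<gamma>' \<in> U2"
  proof (intro exI[of _ \<epsilon>] conjI e ballI impI)
    fix \<gamma>' assume a': "\<gamma>' \<in> admissible_weights E \<sigma>" and cl: "\<forall>i j. E i j \<longrightarrow> \<bar>\<gamma>' i j - \<gamma> i j\<bar> < \<epsilon>"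
    have "\<forall>x. qf N (signed_laplacian N \<gamma>) x - (2 * real N * \<epsilon>) * nrm N x \<le> qf N (signed_laplacian N \<gamma>') x"
    proof
      fix x
      have "\<bar>qf N (signed_laplacian N \<gamma>') x - qf N (signed_laplacian N \<gamma>) x\<bar> \<le> (2 * real N * \<epsilon>) * nrm N x"
        by (rule pert_lap[OF a a' e cl])
      then show "qf N (signed_laplacian N \<gamma>) x - (2 * real N * \<epsilon>) * nrm N x \<le> qf N (signed_laplacian N \<gamma>') x"
        unfolding abs_le_iff by linarith
    qed
    moreover have "2 * real N * \<epsilon> < m" unfolding \<epsilon>_def by (rule eps_choice[OF m])
    ultimately have "n_pos (signed_laplacian N \<gamma>) \<le> n_pos (signed_laplacian N \<gamma>')"
      using mp[rule_format, OF Lc[OF a'] Ls[OF a']] by blast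
    then show "\<gamma>' \<in> U2" using g a' unfolding U2_def by auto
  qed
qed

lemma Emsym: "Em i j = Em j i" using Ew[of i j] Ew[of j i] sym_sign by auto
lemma Epsym: "Ep i j = Ep j i" using Ew[of i j] Ew[of j i] sym_sign by auto

lemma ne1: "U1 \<noteq> {}"
proof -
  define h where "h = (\<lambda>i j. if Em i j then -1 else (0::real))"
  have hs: "\<And>i j. h i j = h j i"
  proof -
    fix i j show "h i j = h j i" unfolding h_def using Emsym[of i j] by simp
  qed
  have hb: "\<And>i j. \<bar>h i j\<bar> \<le> 1" unfolding h_def by simp
  obtain t and J :: "nat set" and v where t: "t > 0" and J: "finite J" and cJ: "N - card P.cls \<le> card J"
    and pp: "\<forall>c. (\<exists>j\<in>J. c j \<noteq> 0) \<longrightarrow> PP N (\<lambda>i j. if Ep i j then t else h i j) (\<lambda>i. \<Sum>l\<in>J. c l * v l i) > 0"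
    using P.big_weight[where h=h, OF hs hb] by (elim exE conjE) (rule that, assumption+)
  define \<gamma> where "\<gamma> = (\<lambda>i j. if Ep i j then t else h i j)"
  have a: "\<gamma> \<in> admissible_weights E \<sigma>"
  proof -
    have "\<forall>i j. \<gamma> i j = \<gamma> j i"
    proof (intro allI)
      fix i j show "\<gamma> i j = \<gamma> j i" using Epsym[of i j] Emsym[of i j] unfolding \<gamma>_def h_def by simp
    qed
    moreover have "\<forall>i j. E i j \<longrightarrow> (\<sigma> i j \<longrightarrow> \<gamma> i j > 0) \<and> (\<not> \<sigma> i j \<longrightarrow> \<gamma> i j < 0)"
      using t unfolding \<gamma>_def h_def by auto
    moreover have "\<forall>i j. \<not> E i j \<longrightarrow> \<gamma> i j = 0" unfolding \<gamma>_def h_def by auto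
    ultimately show ?thesis unfolding admissible_weights_def by blast
  qed
  have "card J \<le> n_neg (signed_laplacian N \<gamma>)"
  proof (rule sym_LB_neg[OF Lc[OF a] Ls[OF a] J, where v = v])
    fix c :: "nat \<Rightarrow> real" assume "\<exists>j\<in>J. c j \<noteq> 0"
    then have "PP N \<gamma> (\<lambda>i. \<Sum>l\<in>J. c l * v l i) > 0" using pp unfolding \<gamma>_def by blast
    then show "qf N (signed_laplacian N \<gamma>) (\<lambda>i. \<Sum>l\<in>J. c l * v l i) < 0" using Lq[OF a] by simp
  qed
  then have "\<gamma> \<in> U1" unfolding U1_def using a cJ P.num_comp by simp
  then show ?thesis by blast
qed

lemma ne2: "U2 \<noteq> {}"
proof -
  define h where "h = (\<lambda>i j. if Ep i j then -1 else (0::real))"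
  have hs: "\<And>i j. h i j = h j i"
  proof -
    fix i j show "h i j = h j i" unfolding h_def using Epsym[of i j] by simp
  qed
  have hb: "\<And>i j. \<bar>h i j\<bar> \<le> 1" unfolding h_def by simp
  obtain t and J :: "nat set" and v where t: "t > 0" and J: "finite J" and cJ: "N - card M.cls \<le> card J"
    and pp: "\<forall>c. (\<exists>j\<in>J. c j \<noteq> 0) \<longrightarrow> PP N (\<lambda>i j. if Em i j then t else h i j) (\<lambda>i. \<Sum>l\<in>J. c l * v l i) > 0"
    using M.big_weight[where h=h, OF hs hb] by (elim exE conjE) (rule that, assumption+)
  define \<gamma> where "\<gamma> = (\<lambda>i j. - (if Em i j then t else h i j))"
  have a: "\<gamma> \<in> admissible_weights E \<sigma>"
  proof -
    have "\<forall>i j. \<gamma> i j = \<gamma> j i"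
    proof (intro allI)
      fix i j show "\<gamma> i j = \<gamma> j i" using Epsym[of i j] Emsym[of i j] unfolding \<gamma>_def h_def by simp
    qed
    moreover have "\<forall>i j. E i j \<longrightarrow> (\<sigma> i j \<longrightarrow> \<gamma> i j > 0) \<and> (\<not> \<sigma> i j \<longrightarrow> \<gamma> i j < 0)"
      using t unfolding \<gamma>_def h_def by auto
    moreover have "\<forall>i j. \<not> E i j \<longrightarrow> \<gamma> i j = 0" unfolding \<gamma>_def h_def by auto
    ultimately show ?thesis unfolding admissible_weights_def by blast
  qed
  have "card J \<le> n_pos (signed_laplacian N \<gamma>)"
  proof (rule sym_LB_pos[OF Lc[OF a] Ls[OF a] J, where v = v])
    fix c :: "nat \<Rightarrow> real" assume "\<exists>j\<in>J. c j \<noteq> 0"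
    then have "PP N (\<lambda>i j. if Em i j then t else h i j) (\<lambda>i. \<Sum>l\<in>J. c l * v l i) > 0" using pp by blast
    then have "PP N \<gamma> (\<lambda>i. \<Sum>l\<in>J. c l * v l i) < 0" unfolding \<gamma>_def PP_neg by simp
    then show "qf N (signed_laplacian N \<gamma>) (\<lambda>i. \<Sum>l\<in>J. c l * v l i) > 0" using Lq[OF a] by simp
  qed
  then have "\<gamma> \<in> U2" unfolding U2_def using a cJ M.num_comp by simp
  then show ?thesis by blast
qed

lemma arith1:
  fixes p q z c d K :: nat
  assumes "c - 1 \<le> p" "c + q \<le> K" "1 \<le> z" "p + q + z = K" "1 \<le> c" "K - c \<le> q"
  shows "int p = int c - 1 \<and> q = K - c \<and> z = 1"
proof -
  have q: "q = K - c" using assms(2,6) by arith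
  then have pz: "p + z = c" using assms(2,4) by arith
  then show ?thesis using assms(1,3,5) q by arith
qed

lemma arith2:
  fixes p q z c K :: nat
  assumes "c + p \<le> K" "c - 1 \<le> q" "1 \<le> z" "p + q + z = K" "1 \<le> c" "K - c \<le> p"
  shows "p = K - c \<and> int q = int c - 1 \<and> z = 1"
proof -
  have p: "p = K - c" using assms(1,6) by arith
  then have qz: "q + z = c" using assms(1,4) by arith
  then show ?thesis using assms(2,3,5) p by arith
qed

lemma U1_props:
  assumes g: "\<gamma> \<in> U1"
  shows "int (n_pos (signed_laplacian N \<gamma>)) = int (num_components N Ep) - 1 \<and>
         n_neg (signed_laplacian N \<gamma>) = N - num_components N Ep \<and>
         n_zero (signed_laplacian N \<gamma>) = 1"
proof -
  have a: "\<gamma> \<in> admissible_weights E \<sigma>" and h: "N - num_components N Ep \<le> n_neg (signed_laplacian N \<gamma>)"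
    using g unfolding U1_def by auto
  show ?thesis by (rule arith1[OF B1[OF a] B4[OF a] B5[OF a] B6[OF a] Bcp(1)[OF a] h])
qed

lemma U2_props:
  assumes g: "\<gamma> \<in> U2"
  shows "n_pos (signed_laplacian N \<gamma>) = N - num_components N Em \<and>
         int (n_neg (signed_laplacian N \<gamma>)) = int (num_components N Em) - 1 \<and>
         n_zero (signed_laplacian N \<gamma>) = 1"
proof -
  have a: "\<gamma> \<in> admissible_weights E \<sigma>" and h: "N - num_components N Em \<le> n_pos (signed_laplacian N \<gamma>)"
    using g unfolding U2_def by auto
  show ?thesis by (rule arith2[OF B2[OF a] B3[OF a] B5[OF a] B6[OF a] Bcp(2)[OF a] h])
qed

lemma arith3:
  fixes p q z c d K :: nat
  assumes "c - 1 \<le> p" "d + p \<le> K" "d - 1 \<le> q" "c + q \<le> K" "1 \<le> z" "p + q + z = K" "1 \<le> c" "1 \<le> d"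
  shows "int c - 1 \<le> int p \<and> int p \<le> int K - int d \<and> int d - 1 \<le> int q \<and>
    int q \<le> int K - int c \<and> 1 \<le> int z \<and> int z \<le> int K + 2 - int d - int c"
proof -
  have "int c - 1 \<le> int p" using assms(1,7) by arith
  moreover have "int d - 1 \<le> int q" using assms(3,8) by arith
  moreover have "int p \<le> int K - int d" using assms(2) by arith
  moreover have "int q \<le> int K - int c" using assms(4) by arith
  moreover have "1 \<le> int z" using assms(5) by arith
  moreover have "int z \<le> int K + 2 - int d - int c"
  proof -
    have "int p + int q + int z = int K" using assms(6) by (metis of_nat_add)
    then show ?thesis using calculation by linarith
  qed
  ultimately show ?thesis by blast
qed

lemma bounds:
  assumes a: "\<gamma> \<in> admissible_weights E \<sigma>"
  shows "int (num_components N Ep) - 1 \<le> int (n_pos (signed_laplacian N \<gamma>)) \<and>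
      int (n_pos (signed_laplacian N \<gamma>)) \<le> int N - int (num_components N Em) \<and>
      int (num_components N Em) - 1 \<le> int (n_neg (signed_laplacian N \<gamma>)) \<and>
      int (n_neg (signed_laplacian N \<gamma>)) \<le> int N - int (num_components N Ep) \<and>
      1 \<le> int (n_zero (signed_laplacian N \<gamma>)) \<and>
      int (n_zero (signed_laplacian N \<gamma>)) \<le>
        int N + 2 - int (num_components N Em) - int (num_components N Ep)"
  by (rule arith3[OF B1[OF a] B2[OF a] B3[OF a] B4[OF a] B5[OF a] B6[OF a] Bcp[OF a]])

end

theorem mainTheorem1:
  fixes N :: nat and E \<sigma> :: "nat \<Rightarrow> nat \<Rightarrow> bool"
  assumes graph: "simple_graph N E"
    and sym_sign: "\<forall>i j. E i j \<longrightarrow> \<sigma> i j = \<sigma> j i"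
    and conn: "graph_connected N E"
  defines "Ep \<equiv> (\<lambda>i j. E i j \<and> \<sigma> i j)"
    and "Em \<equiv> (\<lambda>i j. E i j \<and> \<not> \<sigma> i j)"
  shows
   "(\<forall>\<gamma>\<in>admissible_weights E \<sigma>.
      int (num_components N Ep) - 1 \<le> int (n_pos (signed_laplacian N \<gamma>)) \<and>
      int (n_pos (signed_laplacian N \<gamma>)) \<le> int N - int (num_components N Em) \<and>
      int (num_components N Em) - 1 \<le> int (n_neg (signed_laplacian N \<gamma>)) \<and>
      int (n_neg (signed_laplacian N \<gamma>)) \<le> int N - int (num_components N Ep) \<and>
      1 \<le> int (n_zero (signed_laplacian N \<gamma>)) \<and>
      int (n_zero (signed_laplacian N \<gamma>)) \<le>
        int N + 2 - int (num_components N Em) - int (num_components N Ep))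
    \<and> (\<exists>U. U \<noteq> {} \<and> weights_open E \<sigma> U \<and>
        (\<forall>\<gamma>\<in>U. int (n_pos (signed_laplacian N \<gamma>)) = int (num_components N Ep) - 1 \<and>
                 n_neg (signed_laplacian N \<gamma>) = N - num_components N Ep \<and>
                 n_zero (signed_laplacian N \<gamma>) = 1))
    \<and> (\<exists>U. U \<noteq> {} \<and> weights_open E \<sigma> U \<and>
        (\<forall>\<gamma>\<in>U. n_pos (signed_laplacian N \<gamma>) = N - num_components N Em \<and>
                 int (n_neg (signed_laplacian N \<gamma>)) = int (num_components N Em) - 1 \<and>
                 n_zero (signed_laplacian N \<gamma>) = 1))"
proof -
  interpret S: sgraph N E \<sigma> using graph sym_sign conn by unfold_locales
  show ?thesis unfolding Ep_def Em_def
    using S.bounds S.ne1 S.open1 S.U1_props S.ne2 S.open2 S.U2_props by blast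
qed

end
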